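(* Let $G$ be a compact abelian group with normalized Haar measure $\mu$, and let $f\in\mathbb{Z}[\widehat{G}]$. If $\mu(\{x\in G: f(x)=0\})=0$, then $\mathsf{m}_G(f)\ge0$.
   Context: $\widehat{G}$ is the (multiplicative) dual group of characters of $G$, and $\mathbb{Z}[\widehat{G}]$ is the ring of integral linear combinations of characters, regarded as functions on $G$. For $f\in\mathbb{Z}[\widehat{G}]$, the logarithmic Mahler measure is $\mathsf{m}_G(f)=\int_G\log|f|\,d\mu$ (with $\log 0=-\infty$). *)

theory Defs
  imports "HOL-Analysis.Analysis" "HOL-Probability.Probability"
begin

text \<open>A (Hausdorff) compact abelian group is modelled by a type of class
  topological_ab_group_add and t2_space with compact UNIV (written additively).\<close>

definition normalized_haar :: "'a::topological_ab_group_add measure \<Rightarrow> bool" where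
  "normalized_haar M \<longleftrightarrow>
     space M = UNIV \<and> sets M = sets borel \<and> prob_space M \<and>
     (\<forall>a. \<forall>A \<in> sets borel. emeasure M ((\<lambda>x. a + x) ` A) = emeasure M A) \<and>
     (\<forall>A \<in> sets borel. emeasure M A = (SUP K \<in> {K. compact K \<and> K \<subseteq> A}. emeasure M K))"

definition character :: "('a::topological_ab_group_add \<Rightarrow> complex) \<Rightarrow> bool" where
  "character ch \<longleftrightarrow> continuous_on UNIV ch \<and>
     (\<forall>x y. ch (x + y) = ch x * ch y) \<and> (\<forall>x. cmod (ch x) = 1)"

text \<open>Elements of Z[G^]: integral linear combinations of characters, as functions on G.\<close>
definition int_char_poly :: "('a::topological_ab_group_add \<Rightarrow> complex) \<Rightarrow> bool" where
  "int_char_poly f \<longleftrightarrow> (\<exists>S c. finite S \<and> (\<forall>ch\<in>S. character ch) \<and>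
     f = (\<lambda>x. \<Sum>ch\<in>S. of_int (c ch) * ch x))"

text \<open>Logarithmic Mahler measure in the extended reals, with log 0 = -infinity:
  integral of the positive part of log|f| minus integral of the negative part.\<close>
definition mahler_m :: "'a measure \<Rightarrow> ('a \<Rightarrow> complex) \<Rightarrow> ereal" where
  "mahler_m M f =
     enn2ereal (\<integral>\<^sup>+ x. (if f x = 0 then 0 else ennreal (max 0 (ln (cmod (f x))))) \<partial>M)
   - enn2ereal (\<integral>\<^sup>+ x. (if f x = 0 then \<infinity> else ennreal (max 0 (- ln (cmod (f x))))) \<partial>M)"

end

theory Submission
  imports Defs "Jordan_Normal_Form.Schur_Decomposition"
begin


definition mtrace :: "'b::comm_ring_1 mat \<Rightarrow> 'b" where
  "mtrace A = (\<Sum>i<dim_row A. A $$ (i,i))"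

lemma mtrace_comm:
  assumes A: "A \<in> carrier_mat n m" and B: "B \<in> carrier_mat m n"
  shows "mtrace (A * B) = mtrace (B * A)"
proof -
  have "mtrace (A*B) = (\<Sum>i<n. \<Sum>j<m. A$$(i,j) * B$$(j,i))"
    using A B unfolding mtrace_def
    by (intro sum.cong) (auto simp: scalar_prod_def atLeast0LessThan intro!: sum.cong)
  also have "\<dots> = (\<Sum>j<m. \<Sum>i<n. B$$(j,i) * A$$(i,j))"
    by (subst sum.swap) (simp add: mult.commute)
  also have "\<dots> = mtrace (B*A)"
    using A B unfolding mtrace_def
    by (intro sum.cong) (auto simp: scalar_prod_def atLeast0LessThan intro!: sum.cong)
  finally show ?thesis .
qed

lemma upper_tri_mult:
  assumes A: "A \<in> carrier_mat n n" and B: "B \<in> carrier_mat n n"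
    and uA: "upper_triangular A" and uB: "upper_triangular B"
  shows "upper_triangular (A*B) \<and> (\<forall>i<n. (A*B)$$(i,i) = A$$(i,i) * B$$(i,i))"
proof
  show "upper_triangular (A*B)"
  proof
    fix i j assume ji: "j < i" and i: "i < dim_row (A*B)"
    have "(A*B)$$(i,j) = (\<Sum>l\<in>{0..<n}. A$$(i,l) * B$$(l,j))"
      using A B i ji by (auto simp: scalar_prod_def intro!: sum.cong)
    also have "\<dots> = 0"
    proof (intro sum.neutral ballI)
      fix l assume l: "l \<in> {0..<n}"
      show "A$$(i,l) * B$$(l,j) = 0"
      proof (cases "l < i")
        case True then show ?thesis using upper_triangularD[OF uA True] A i by auto
      next
        case False then have "j < l" using ji by auto
        then show ?thesis using upper_triangularD[OF uB \<open>j < l\<close>] B l by auto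
      qed
    qed
    finally show "(A*B)$$(i,j) = 0" .
  qed
  show "\<forall>i<n. (A*B)$$(i,i) = A$$(i,i) * B$$(i,i)"
  proof (intro allI impI)
    fix i assume i: "i < n"
    have "(A*B)$$(i,i) = (\<Sum>l\<in>{0..<n}. A$$(i,l) * B$$(l,i))"
      using A B i by (auto simp: scalar_prod_def intro!: sum.cong)
    also have "\<dots> = (\<Sum>l\<in>{i}. A$$(i,l) * B$$(l,i))"
    proof (rule sum.mono_neutral_right)
      show "\<forall>l\<in>{0..<n} - {i}. A$$(i,l) * B$$(l,i) = 0"
      proof
        fix l assume l: "l \<in> {0..<n} - {i}"
        show "A$$(i,l) * B$$(l,i) = 0"
        proof (cases "l < i")
          case True then show ?thesis using upper_triangularD[OF uA True] A i by auto
        next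
          case False then have "i < l" using l by auto
          then show ?thesis using upper_triangularD[OF uB \<open>i < l\<close>] B l by auto
        qed
      qed
    qed (use i in auto)
    finally show "(A*B)$$(i,i) = A$$(i,i) * B$$(i,i)" by simp
  qed
qed

lemma upper_tri_pow:
  assumes A: "A \<in> carrier_mat n n" and uA: "upper_triangular A"
  shows "upper_triangular (A ^\<^sub>m k) \<and> (\<forall>i<n. (A ^\<^sub>m k)$$(i,i) = (A$$(i,i))^k)"
proof (induction k)
  case 0
  then show ?case using A by auto
next
  case (Suc k)
  have "A ^\<^sub>m k \<in> carrier_mat n n" using A by auto
  from upper_tri_mult[OF this A] Suc uA show ?case by (auto simp del: power_Suc simp add: power_Suc2)
qed

lemma prod_list_filter_split:
  "(\<Prod>c\<leftarrow>cs. f c) = (\<Prod>c\<leftarrow>filter P cs. f c) * (\<Prod>c\<leftarrow>filter (\<lambda>c. \<not> P c) cs. (f c :: 'b::comm_monoid_mult))"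
  by (induction cs) (auto simp: ac_simps)

lemma coeff_linear_prod:
  fixes cs :: "'b::comm_ring_1 list"
  shows "coeff (\<Prod>c\<leftarrow>cs. [:-c,1:]) (length (filter (\<lambda>c. c = 0) cs))
     = (\<Prod>c\<leftarrow>filter (\<lambda>c. c \<noteq> 0) cs. - c)"
proof -
  let ?z = "length (filter (\<lambda>c. c = 0) cs)"
  have "(\<Prod>c\<leftarrow>filter (\<lambda>c. c = 0) cs. [:-c,1:]) = [:0,1:] ^ ?z"
    by (induction cs) auto
  also have "\<dots> = monom 1 ?z" by (simp add: monom_altdef)
  finally have "(\<Prod>c\<leftarrow>cs. [:-c,1:]) = monom 1 ?z * (\<Prod>c\<leftarrow>filter (\<lambda>c. c \<noteq> 0) cs. [:-c,1:])"
    using prod_list_filter_split[of "\<lambda>c. [:-c,1:]" cs "\<lambda>c. c = 0"] by simp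
  then have "coeff (\<Prod>c\<leftarrow>cs. [:-c,1:]) ?z = coeff (\<Prod>c\<leftarrow>filter (\<lambda>c. c \<noteq> 0) cs. [:-c,1:]) 0"
    using coeff_monom_mult[of 1 ?z "\<Prod>c\<leftarrow>filter (\<lambda>c. c \<noteq> 0) cs. [:-c,1:]" ?z] by simp
  also have "\<dots> = poly (\<Prod>c\<leftarrow>filter (\<lambda>c. c \<noteq> 0) cs. [:-c,1:]) 0"
    by (simp add: poly_0_coeff_0)
  also have "\<dots> = (\<Prod>c\<leftarrow>filter (\<lambda>c. c \<noteq> 0) cs. - c)"
    by (simp add: poly_prod_list o_def)
  finally show ?thesis .
qed

lemma spectral_data:
  fixes T :: "int mat" and B :: real
  assumes T: "T \<in> carrier_mat N N"
  assumes quad: "\<And>v. v \<in> carrier_vec N \<Longrightarrow> \<exists>r. (\<Sum>i<N. cnj (v$i) * ((map_mat of_int T :: complex mat) *\<^sub>v v)$i) = complex_of_real r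
        \<and> 0 \<le> r \<and> r \<le> B * (\<Sum>i<N. (cmod (v$i))\<^sup>2)"
  shows "\<exists>as::real list. length as = N \<and> (\<forall>a\<in>set as. 0 \<le> a \<and> a \<le> B) \<and>
      (\<forall>k. (\<Sum>a\<leftarrow>as. a^k) = Re (mtrace ((map_mat of_int T :: complex mat) ^\<^sub>m k))) \<and>
      1 \<le> prod_list (filter (\<lambda>a. a \<noteq> 0) as)"
proof -
  define Tc where "Tc = (map_mat of_int T :: complex mat)"
  have Tc: "Tc \<in> carrier_mat N N" using T by (simp add: Tc_def)
  obtain cs where cp: "char_poly Tc = (\<Prod>a\<leftarrow>cs. [:- a, 1:])" and lcs: "length cs = N"
    using char_poly_factorized[OF Tc] by blast
  obtain U P Q where sd: "schur_decomposition Tc cs = (U,P,Q)"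
    by (cases "schur_decomposition Tc cs") auto
  from schur_decomposition[OF Tc cp sd]
  have sim: "similar_mat_wit Tc U P Q" and ut: "upper_triangular U" and dg: "diag_mat U = cs"
    by auto
  from sim have U: "U \<in> carrier_mat N N" and P: "P \<in> carrier_mat N N" and Q: "Q \<in> carrier_mat N N"
    and QP: "Q * P = 1\<^sub>m N"
    using Tc unfolding similar_mat_wit_def Let_def by auto
  have real_ev: "\<exists>r. c = complex_of_real r \<and> 0 \<le> r \<and> r \<le> B" if c: "c \<in> set cs" for c
  proof -
    have "poly (char_poly Tc) c = 0"
      unfolding cp poly_prod_list using c
      by (auto simp: prod_list_zero_iff o_def)
    then have "eigenvalue Tc c" using eigenvalue_root_char_poly[OF Tc] by simp
    then obtain v where ev: "eigenvector Tc v c" unfolding eigenvalue_def by blast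
    then have v: "v \<in> carrier_vec N" and v0: "v \<noteq> 0\<^sub>v N" and Tv: "Tc *\<^sub>v v = c \<cdot>\<^sub>v v"
      using Tc unfolding eigenvector_def by auto
    obtain r where r: "(\<Sum>i<N. cnj (v$i) * (Tc *\<^sub>v v)$i) = complex_of_real r"
      and r0: "0 \<le> r" and rB: "r \<le> B * (\<Sum>i<N. (cmod (v$i))\<^sup>2)"
      using quad[OF v] unfolding Tc_def by blast
    define s where "s = (\<Sum>i<N. (cmod (v$i))\<^sup>2)"
    obtain i where i: "i < N" and vi: "v$i \<noteq> 0"
      using v v0 by (metis carrier_vecD eq_vecI index_zero_vec(1) index_zero_vec(2))
    have "0 < (cmod (v$i))\<^sup>2" using vi by simp
    also have "\<dots> \<le> s" unfolding s_def
      by (rule member_le_sum) (use i in auto)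
    finally have s0: "0 < s" .
    have "(\<Sum>i<N. cnj (v$i) * (Tc *\<^sub>v v)$i) = (\<Sum>i<N. c * complex_of_real ((cmod (v$i))\<^sup>2))"
    proof (intro sum.cong refl)
      fix j assume "j \<in> {..<N}"
      then have "(Tc *\<^sub>v v)$j = c * v$j" using Tv v by (simp add: carrier_vecD)
      then show "cnj (v$j) * (Tc *\<^sub>v v)$j = c * complex_of_real ((cmod (v$j))\<^sup>2)"
      proof -
        have "cnj (v$j) * (c * v$j) = c * (v$j * cnj (v$j))" by (simp add: ac_simps)
        also have "v$j * cnj (v$j) = complex_of_real ((cmod (v$j))\<^sup>2)"
          using complex_norm_square[of "v$j"] by simp
        finally show ?thesis using \<open>(Tc *\<^sub>v v)$j = c * v$j\<close> by simp
      qed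
    qed
    also have "\<dots> = c * complex_of_real s" unfolding s_def by (simp add: sum_distrib_left)
    finally have "c * complex_of_real s = complex_of_real r" using r by simp
    then have "c = complex_of_real (r / s)" using s0 by (simp add: field_simps)
    moreover have "0 \<le> r / s" using r0 s0 by simp
    moreover have "r / s \<le> B" using rB s0 unfolding s_def[symmetric] by (simp add: divide_le_eq mult.commute)
    ultimately show ?thesis by blast
  qed
  define as where "as = map Re cs"
  have cs_as: "cs = map complex_of_real as"
    unfolding as_def using real_ev by (induction cs) force+
  have las: "length as = N" using lcs as_def by simp
  have bnd: "\<forall>a\<in>set as. 0 \<le> a \<and> a \<le> B"
    using real_ev unfolding as_def by fastforce
  have tr: "(\<Sum>a\<leftarrow>as. a^k) = Re (mtrace (Tc ^\<^sub>m k))" for k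
  proof -
    have "Tc ^\<^sub>m k = P * U ^\<^sub>m k * Q" using similar_mat_wit_pow_id[OF sim] .
    then have "mtrace (Tc ^\<^sub>m k) = mtrace ((P * U ^\<^sub>m k) * Q)" by simp
    also have "\<dots> = mtrace (Q * (P * U ^\<^sub>m k))"
      by (rule mtrace_comm[of _ N N]) (use P U Q in auto)
    also have "Q * (P * U ^\<^sub>m k) = (Q * P) * U ^\<^sub>m k"
      using P U Q by (simp add: assoc_mult_mat[of Q N N P N "U ^\<^sub>m k" N])
    also have "\<dots> = U ^\<^sub>m k" using QP U by simp
    also have "mtrace (U ^\<^sub>m k) = (\<Sum>i<N. (U$$(i,i))^k)"
      unfolding mtrace_def using upper_tri_pow[OF U ut, of k] U by simp
    also have "\<dots> = (\<Sum>c\<leftarrow>cs. c^k)"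
    proof -
      have "(\<Sum>c\<leftarrow>cs. c^k) = (\<Sum>i\<leftarrow>[0..<N]. (U$$(i,i))^k)"
        using dg U unfolding diag_mat_def by (auto simp: o_def)
      also have "\<dots> = (\<Sum>i\<in>set [0..<N]. (U$$(i,i))^k)"
        by (rule sum_set_upt_conv_sum_list_nat[symmetric])
      finally show ?thesis by (simp add: atLeast0LessThan)
    qed
    finally have "mtrace (Tc ^\<^sub>m k) = (\<Sum>c\<leftarrow>cs. c^k)" .
    moreover have "(\<Sum>x\<leftarrow>as. complex_of_real x ^ k) = complex_of_real (\<Sum>a\<leftarrow>as. a^k)"
      by (induction as) auto
    ultimately show ?thesis unfolding cs_as by (simp add: o_def)
  qed
  have "char_poly Tc = of_int_poly (char_poly T)"
    unfolding Tc_def using of_int_hom.char_poly_hom[OF T] by simp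
  then have "coeff (char_poly Tc) (length (filter (\<lambda>c. c = 0) cs)) =
      of_int (coeff (char_poly T) (length (filter (\<lambda>c. c = 0) cs)))" by simp
  then obtain m :: int where m: "(\<Prod>c\<leftarrow>filter (\<lambda>c. c \<noteq> 0) cs. - c) = of_int m"
    unfolding cp coeff_linear_prod by blast
  have "(\<Prod>c\<leftarrow>filter (\<lambda>c. c \<noteq> 0) cs. - c) = complex_of_real (\<Prod>a\<leftarrow>filter (\<lambda>a. a \<noteq> 0) as. - a)"
    unfolding cs_as by (induction as) auto
  with m have m': "(\<Prod>a\<leftarrow>filter (\<lambda>a. a \<noteq> 0) as. - a) = of_int m"
    by (metis of_real_eq_iff of_real_of_int_eq)
  have "(\<Prod>a\<leftarrow>filter (\<lambda>a. a \<noteq> 0) as. - a) \<noteq> 0"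
    by (induction as) auto
  with m' have m0: "m \<noteq> 0" by auto
  have "\<bar>\<Prod>a\<leftarrow>filter (\<lambda>a. a \<noteq> 0) as. - a\<bar> = prod_list (filter (\<lambda>a. a \<noteq> 0) as)"
    using bnd by (induction as) (auto simp: abs_mult)
  moreover have "1 \<le> \<bar>real_of_int m\<bar>" using m0 by linarith
  ultimately have "1 \<le> prod_list (filter (\<lambda>a. a \<noteq> 0) as)" using m' by simp
  with las bnd tr show ?thesis unfolding Tc_def by blast
qed


definition chmon :: "('a \<Rightarrow> complex) set \<Rightarrow> (('a \<Rightarrow> complex) \<Rightarrow> int) \<Rightarrow> 'a \<Rightarrow> complex" where
  "chmon S g = (\<lambda>x. \<Prod>ch\<in>S. (ch x) powi (g ch))"

definition Bx :: "('a \<Rightarrow> complex) set \<Rightarrow> nat \<Rightarrow> ('a \<Rightarrow> complex) set" where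
  "Bx S n = chmon S ` (PiE S (\<lambda>_. {-int n..int n}))"

lemma Bx_finite: "finite S \<Longrightarrow> finite (Bx S n)"
  unfolding Bx_def by (intro finite_imageI finite_PiE) auto

lemma Bx_card: "finite S \<Longrightarrow> card (Bx S n) \<le> (2*n+1)^card S"
proof -
  assume S: "finite S"
  have "card (Bx S n) \<le> card (PiE S (\<lambda>_. {-int n..int n}))"
    unfolding Bx_def by (intro card_image_le finite_PiE S) auto
  also have "\<dots> = (card {-int n..int n})^card S"
    using S by (simp add: card_PiE)
  also have "card {-int n..int n} = 2*n+1" by (simp add: nat_add_distrib nat_mult_distrib)
  finally show ?thesis .
qed

lemma Bx_mono: "m \<le> n \<Longrightarrow> Bx S m \<subseteq> Bx S n"
  unfolding Bx_def by (intro image_mono PiE_mono) auto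

lemma Bx_one: "(\<lambda>_. 1) \<in> Bx S n"
proof -
  have "restrict (\<lambda>_. 0) S \<in> PiE S (\<lambda>_. {-int n..int n})" by auto
  moreover have "chmon S (restrict (\<lambda>_. 0) S) = (\<lambda>_. 1)"
    unfolding chmon_def by (auto intro!: prod.neutral)
  ultimately show ?thesis unfolding Bx_def by (metis image_eqI)
qed

lemma Bx_nonempty: "Bx S n \<noteq> {}" using Bx_one by blast

lemma Bx_shift:
  assumes unit: "\<And>ch x. ch \<in> S \<Longrightarrow> cmod (ch x) = 1"
    and S: "finite S" and chi: "ch \<in> S" and psi: "ps \<in> S" and ga: "\<gamma> \<in> Bx S m"
  shows "(\<lambda>x. ch x * cnj (ps x) * \<gamma> x) \<in> Bx S (Suc m)"
proof -
  obtain g where g: "g \<in> PiE S (\<lambda>_. {-int m..int m})" and gg: "\<gamma> = chmon S g"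
    using ga unfolding Bx_def by auto
  define e where "e = (\<lambda>ph. (if ph = ch then 1 else 0) + (if ph = ps then -1 else (0::int)))"
  define g' where "g' = restrict (\<lambda>ph. g ph + e ph) S"
  have g': "g' \<in> PiE S (\<lambda>_. {-int (Suc m)..int (Suc m)})"
    using g unfolding g'_def e_def by (auto simp: PiE_iff)
  have nz: "ph x \<noteq> 0" if "ph \<in> S" for ph x using unit[OF that, of x] by auto
  have "chmon S g' x = ch x * cnj (ps x) * \<gamma> x" for x
  proof -
    have "chmon S g' x = (\<Prod>ph\<in>S. (ph x) powi (g ph) * ((ph x) powi (if ph = ch then 1 else 0) * (ph x) powi (if ph = ps then -1 else 0)))"
      unfolding chmon_def g'_def e_def
      by (intro prod.cong refl) (simp add: nz power_int_add)
    also have "\<dots> = \<gamma> x * ((\<Prod>ph\<in>S. (ph x) powi (if ph = ch then 1 else 0)) * (\<Prod>ph\<in>S. (ph x) powi (if ph = ps then -1 else 0)))"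
      unfolding gg chmon_def by (simp add: prod.distrib)
    also have "(\<Prod>ph\<in>S. (ph x) powi (if ph = ch then 1 else 0)) = (\<Prod>ph\<in>S. if ph = ch then ch x else 1)"
      by (intro prod.cong) auto
    also have "\<dots> = ch x" using S chi by (simp add: prod.delta)
    also have "(\<Prod>ph\<in>S. (ph x) powi (if ph = ps then -1 else 0)) = (\<Prod>ph\<in>S. if ph = ps then inverse (ps x) else 1)"
      by (intro prod.cong) (auto simp: power_int_minus)
    also have "\<dots> = inverse (ps x)" using S psi by (simp add: prod.delta)
    also have "inverse (ps x) = cnj (ps x)"
    proof -
      have "ps x * cnj (ps x) = 1"
        using unit[OF psi, of x] complex_norm_square[of "ps x"] by simp
      then show ?thesis by (rule inverse_unique)
    qed
    finally have "chmon S g' x = \<gamma> x * (ch x * cnj (ps x))" .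
    then show ?thesis by (simp only: mult.commute mult.left_commute)
  qed
  then have "(\<lambda>x. ch x * cnj (ps x) * \<gamma> x) = chmon S g'" by auto
  with g' show ?thesis unfolding Bx_def by blast
qed

lemma exp_beats_poly:
  fixes r :: real and L s :: nat
  assumes r: "1 < r" and L: "0 < L"
  shows "\<exists>K. real ((2*K*L+1)^s) < r^K"
proof (cases "s = 0")
  case True
  then show ?thesis using r by (intro exI[of _ 1]) auto
next
  case False
  define \<rho> where "\<rho> = r powr (1/s)"
  have \<rho>1: "1 < \<rho>" unfolding \<rho>_def using r False by (simp add: gr_one_powr)
  have \<rho>s: "\<rho>^s = r"
  proof -
    have "\<rho>^s = \<rho> powr (real s)" using \<rho>1 by (simp add: powr_realpow)
    also have "\<dots> = r powr (1/s * s)" unfolding \<rho>_def using r by (simp add: powr_powr)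
    also have "\<dots> = r" using False r by simp
    finally show ?thesis .
  qed
  have lim: "(\<lambda>n. real n / \<rho>^n) \<longlonglongrightarrow> 0" using lim_n_over_pown[of \<rho>] \<rho>1 by simp
  have "0 < 1 / (3 * real L)" using L by simp
  from order_tendstoD(2)[OF lim this] obtain K0 where K0: "\<And>K. K \<ge> K0 \<Longrightarrow> real K / \<rho>^K < 1 / (3 * real L)"
    unfolding eventually_sequentially by blast
  define K where "K = max K0 1"
  have K1: "1 \<le> K" and "K0 \<le> K" unfolding K_def by auto
  then have "real K / \<rho>^K < 1 / (3 * real L)" using K0 by blast
  then have "3 * real L * real K < \<rho>^K" using \<rho>1 L by (simp add: field_simps)
  moreover have "real (2*K*L+1) \<le> 3 * real L * real K" using K1 L
  proof -
    have "1 \<le> K * L" using K1 L by simp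
    then have "(1::real) \<le> real K * real L" by (metis of_nat_1 of_nat_le_iff of_nat_mult)
    then show ?thesis by (simp add: algebra_simps)
  qed
  ultimately have lt: "real (2*K*L+1) < \<rho>^K" by linarith
  have "real ((2*K*L+1)^s) = (real (2*K*L+1))^s" by simp
  also have "\<dots> < (\<rho>^K)^s" by (rule power_strict_mono[OF lt]) (use False in auto)
  also have "\<dots> = r^K" by (simp add: \<rho>s[symmetric] power_mult[symmetric] mult.commute)
  finally show ?thesis by blast
qed

lemma folner:
  assumes S: "finite S" and th: "0 < \<theta>"
  shows "\<exists>n\<ge>L. real (card (Bx S n)) - real (card (Bx S (n - L))) \<le> \<theta> * real (card (Bx S n))"
proof (rule ccontr)
  assume neg: "\<not> ?thesis"
  define c where "c = (\<lambda>n. real (card (Bx S n)))"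
  have neg': "c (n - L) < (1 - \<theta>) * c n" if "L \<le> n" for n
    using neg that unfolding c_def by (auto simp: algebra_simps)
  have c1: "1 \<le> c n" for n
  proof -
    have "card (Bx S n) > 0" using Bx_finite[OF S] Bx_nonempty card_gt_0_iff by blast
    then show ?thesis unfolding c_def by simp
  qed
  have L: "0 < L"
  proof (rule ccontr)
    assume "\<not> 0 < L" then have "L = 0" by simp
    then show False using neg'[of 0] th c1[of 0] by simp
  qed
  have th1: "\<theta> < 1"
  proof (rule ccontr)
    assume "\<not> \<theta> < 1"
    then have "1 - \<theta> \<le> 0" by simp
    then have "(1 - \<theta>) * c L \<le> 0" using c1[of L] by (simp add: mult_nonpos_nonneg)
    then show False using neg'[of L] c1[of 0] by simp
  qed
  define r where "r = 1 / (1 - \<theta>)"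
  have r1: "1 < r" unfolding r_def using th th1 by simp
  have step: "r * c (n - L) < c n" if "L \<le> n" for n
  proof -
    have "c (n - L) / (1 - \<theta>) < c n"
      using neg'[OF that] th1 by (simp add: pos_divide_less_eq mult.commute)
    then show ?thesis unfolding r_def by simp
  qed
  have grow: "r^k \<le> c (k*L)" for k
  proof (induction k)
    case 0 then show ?case using c1[of 0] by simp
  next
    case (Suc k)
    have "r^Suc k = r * r^k" by simp
    also have "\<dots> \<le> r * c (k*L)" using Suc r1 by simp
    also have "\<dots> < c (Suc k * L)" using step[of "Suc k * L"] by simp
    finally show ?case by simp
  qed
  obtain K where K: "real ((2*K*L+1)^card S) < r^K" using exp_beats_poly[OF r1 L] by blast
  have "card (Bx S (K*L)) \<le> (2*(K*L)+1)^card S" using Bx_card[OF S] .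
  then have "c (K*L) \<le> real ((2*K*L+1)^card S)" unfolding c_def by (simp only: mult.assoc of_nat_le_iff)
  then show False using K grow[of K] by simp
qed



locale hsetup =
  fixes M :: "'a::topological_ab_group_add measure"
  assumes haar: "normalized_haar M"
begin

lemma spaceM[simp]: "space M = UNIV" and setsM: "sets M = sets borel" and probM: "prob_space M"
  using haar unfolding normalized_haar_def by auto

lemma inv: "A \<in> sets borel \<Longrightarrow> emeasure M ((\<lambda>x. a + x) ` A) = emeasure M A"
  using haar unfolding normalized_haar_def by auto

lemma cont_meas: "continuous_on UNIV g \<Longrightarrow> g \<in> borel_measurable M"
  using borel_measurable_continuous_onI measurable_cong_sets[OF setsM refl] by blast

lemma trans_meas: "(\<lambda>x. a + x) \<in> measurable M M"
proof -
  have "continuous_on UNIV (\<lambda>x::'a. a + x)" by (intro continuous_intros)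
  then have "(\<lambda>x::'a. a + x) \<in> borel_measurable borel" by (rule borel_measurable_continuous_onI)
  then show ?thesis using measurable_cong_sets[OF setsM setsM] by blast
qed

lemma distr_trans: "distr M M (\<lambda>x. a + x) = M"
proof (rule measure_eqI)
  show "sets (distr M M (\<lambda>x. a + x)) = sets M" by simp
  fix A assume "A \<in> sets (distr M M (\<lambda>x. a + x))"
  then have A: "A \<in> sets borel" using setsM by simp
  have "(\<lambda>x. a + x) -` A \<inter> space M = (\<lambda>x. - a + x) ` A"
  proof (rule equalityI; rule subsetI)
    fix x assume "x \<in> (\<lambda>x. a + x) -` A \<inter> space M"
    then have "a + x \<in> A" by simp
    moreover have "x = -a + (a + x)" by simp
    ultimately show "x \<in> (\<lambda>x. -a + x) ` A" by (rule rev_image_eqI)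
  next
    fix x assume "x \<in> (\<lambda>x. -a + x) ` A"
    then obtain y where "y \<in> A" "x = -a + y" by auto
    then show "x \<in> (\<lambda>x. a + x) -` A \<inter> space M" by simp
  qed
  then show "emeasure (distr M M (\<lambda>x. a + x)) A = emeasure M A"
    using A inv[OF A, of "-a"] trans_meas setsM by (simp add: emeasure_distr)
qed

lemma integral_trans:
  fixes g :: "'a \<Rightarrow> 'b::{banach, second_countable_topology}"
  assumes g: "g \<in> borel_measurable M"
  shows "(\<integral>x. g (a + x) \<partial>M) = (\<integral>x. g x \<partial>M)"
proof -
  have "(\<integral>x. g x \<partial>M) = (\<integral>x. g x \<partial>(distr M M (\<lambda>x. a + x)))" by (simp add: distr_trans)
  also have "\<dots> = (\<integral>x. g (a + x) \<partial>M)"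
    by (rule integral_distr[OF trans_meas g])
  finally show ?thesis by simp
qed

lemma integrable_cont_bounded:
  fixes g :: "'a \<Rightarrow> 'b::{banach, second_countable_topology}"
  assumes "continuous_on UNIV g" "\<And>x. norm (g x) \<le> C"
  shows "integrable M g"
proof -
  interpret prob_space M by (rule probM)
  show ?thesis
    by (rule integrable_const_bound[where B=C]) (use assms cont_meas in auto)
qed

lemma char_cont: "character g \<Longrightarrow> continuous_on UNIV g"
  and char_mult: "character g \<Longrightarrow> g (x + y) = g x * g y"
  and char_norm: "character g \<Longrightarrow> cmod (g x) = 1"
  unfolding character_def by auto

lemma char_cnj_mult: "character g \<Longrightarrow> g x * cnj (g x) = 1"
proof -
  assume g: "character g"
  have "complex_of_real ((cmod (g x))^2) = g x * cnj (g x)" by (rule complex_norm_square)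
  with char_norm[OF g] show ?thesis by simp
qed

lemma char_integral:
  assumes g: "character g"
  shows "(\<integral>x. g x \<partial>M) = (if g = (\<lambda>_. 1) then 1 else 0)"
proof (cases "g = (\<lambda>_. 1)")
  case True
  interpret prob_space M by (rule probM)
  show ?thesis using True prob_space by simp
next
  case False
  then obtain a where a: "g a \<noteq> 1" by auto
  have "(\<integral>x. g x \<partial>M) = (\<integral>x. g (a + x) \<partial>M)"
    using integral_trans[OF cont_meas[OF char_cont[OF g]]] by simp
  also have "\<dots> = (\<integral>x. g a * g x \<partial>M)" using char_mult[OF g] by simp
  also have "\<dots> = g a * (\<integral>x. g x \<partial>M)" by simp
  finally have "(1 - g a) * (\<integral>x. g x \<partial>M) = 0" by (simp add: algebra_simps)
  then show ?thesis using a False by simp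
qed

end

lemma character_mult: "character a \<Longrightarrow> character b \<Longrightarrow> character (\<lambda>x. a x * b x)"
  unfolding character_def by (auto intro!: continuous_intros simp: norm_mult ac_simps)

lemma character_cnj: "character a \<Longrightarrow> character (\<lambda>x. cnj (a x))"
  unfolding character_def by (auto intro!: continuous_intros)

lemma character_one: "character (\<lambda>_. 1)"
  unfolding character_def by auto

lemma character_chmon:
  assumes "\<And>ch. ch \<in> S \<Longrightarrow> character ch"
  shows "character (chmon S g)"
proof -
  have nz: "ch x \<noteq> 0" if "ch \<in> S" for ch x
    using assms[OF that] unfolding character_def by (metis norm_zero zero_neq_one)
  show ?thesis
    unfolding character_def chmon_def
  proof (intro conjI allI)
    show "continuous_on UNIV (\<lambda>x. \<Prod>ch\<in>S. ch x powi g ch)"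
      using assms nz unfolding character_def by (auto intro!: continuous_intros)
    fix x y
    show "(\<Prod>ch\<in>S. ch (x + y) powi g ch) = (\<Prod>ch\<in>S. ch x powi g ch) * (\<Prod>ch\<in>S. ch y powi g ch)"
    proof (subst prod.distrib[symmetric], intro prod.cong refl)
      fix ch assume "ch \<in> S"
      then have "ch (x + y) = ch x * ch y" using assms unfolding character_def by blast
      then show "ch (x + y) powi g ch = ch x powi g ch * ch y powi g ch"
        by (simp add: power_int_mult_distrib)
    qed
    show "cmod (\<Prod>ch\<in>S. ch x powi g ch) = 1"
    proof -
      have "cmod (\<Prod>ch\<in>S. ch x powi g ch) = (\<Prod>ch\<in>S. cmod (ch x) powi g ch)"
        by (simp add: prod_norm[symmetric] norm_power_int)
      also have "\<dots> = (\<Prod>ch\<in>S. 1)"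
      proof (intro prod.cong refl)
        fix ch assume "ch \<in> S"
        then have "cmod (ch x) = 1" using assms unfolding character_def by blast
        then show "cmod (ch x) powi g ch = 1" by simp
      qed
      finally show ?thesis by simp
    qed
  qed
qed

lemma Bx_char: "(\<And>ch. ch \<in> S \<Longrightarrow> character ch) \<Longrightarrow> \<gamma> \<in> Bx S n \<Longrightarrow> character \<gamma>"
proof -
  assume a: "\<And>ch. ch \<in> S \<Longrightarrow> character ch" and "\<gamma> \<in> Bx S n"
  then obtain g where "\<gamma> = chmon S g" unfolding Bx_def by auto
  then show ?thesis using character_chmon[OF a] by simp
qed

context hsetup
begin

lemma orth:
  assumes "character b" "character g"
  shows "(\<integral>x. b x * cnj (g x) \<partial>M) = (if b = g then 1 else 0)"
proof -
  have c: "character (\<lambda>x. b x * cnj (g x))" by (intro character_mult character_cnj assms)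
  have "(\<lambda>x. b x * cnj (g x)) = (\<lambda>_. 1) \<longleftrightarrow> b = g"
  proof
    assume h: "(\<lambda>x. b x * cnj (g x)) = (\<lambda>_. 1)"
    show "b = g"
    proof
      fix x
      have "b x * cnj (g x) = 1" using fun_cong[OF h, of x] by simp
      moreover have "g x * cnj (g x) = 1" using char_cnj_mult[OF assms(2)] .
      ultimately have eq: "b x * cnj (g x) = g x * cnj (g x)" by simp
      have "cnj (g x) \<noteq> 0" using \<open>g x * cnj (g x) = 1\<close> by auto
      with eq show "b x = g x" by simp
    qed
  next
    assume "b = g"
    then show "(\<lambda>x. b x * cnj (g x)) = (\<lambda>_. 1)"
      using char_cnj_mult[OF assms(2)] by (auto simp: fun_eq_iff)
  qed
  then show ?thesis using char_integral[OF c] by simp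
qed

end


locale fsetup = hsetup M for M :: "'a::topological_ab_group_add measure" +
  fixes S :: "('a \<Rightarrow> complex) set" and c :: "('a \<Rightarrow> complex) \<Rightarrow> int"
  assumes finS: "finite S" and charS: "\<And>ch. ch \<in> S \<Longrightarrow> character ch"
begin

definition "fF x = (\<Sum>ch\<in>S. of_int (c ch) * ch x)"
definition "hc x = fF x * cnj (fF x)"
definition "hr x = (cmod (fF x))^2"
definition "Cb = (\<Sum>ch\<in>S. real_of_int \<bar>c ch\<bar>)^2"
definition "shft ch ps \<gamma> = (\<lambda>x. ch x * cnj (ps x) * \<gamma> x)"
definition "Tint \<gamma> \<gamma>' = (\<Sum>p\<in>S\<times>S. c (fst p) * c (snd p) * (if shft (fst p) (snd p) \<gamma>' = \<gamma> then 1 else 0))"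

lemma fF_cont: "continuous_on UNIV fF"
  unfolding fF_def by (intro continuous_intros char_cont charS)

lemma hc_cont: "continuous_on UNIV hc"
  unfolding hc_def by (intro continuous_intros fF_cont)

lemma hr_cont: "continuous_on UNIV hr"
  unfolding hr_def by (intro continuous_intros fF_cont)

lemma fF_bound: "cmod (fF x) \<le> (\<Sum>ch\<in>S. real_of_int \<bar>c ch\<bar>)"
proof -
  have "cmod (fF x) \<le> (\<Sum>ch\<in>S. cmod (of_int (c ch) * ch x))"
    unfolding fF_def by (rule norm_sum)
  also have "\<dots> = (\<Sum>ch\<in>S. real_of_int \<bar>c ch\<bar>)"
    by (intro sum.cong refl) (simp add: norm_mult char_norm[OF charS])
  finally show ?thesis .
qed

lemma Cb_nonneg: "0 \<le> Cb" unfolding Cb_def by simp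

lemma hr_bound: "0 \<le> hr x" "hr x \<le> Cb"
proof -
  show "0 \<le> hr x" unfolding hr_def by simp
  show "hr x \<le> Cb" unfolding hr_def Cb_def
    by (rule power_mono[OF fF_bound]) simp
qed

lemma hc_hr: "hc x = complex_of_real (hr x)"
  unfolding hc_def hr_def using complex_norm_square[of "fF x"] by simp

lemma hc_expand: "hc x = (\<Sum>p\<in>S\<times>S. of_int (c (fst p) * c (snd p)) * (fst p x * cnj (snd p x)))"
proof -
  have "hc x = (\<Sum>ch\<in>S. of_int (c ch) * ch x) * (\<Sum>ps\<in>S. of_int (c ps) * cnj (ps x))"
    unfolding hc_def fF_def by (simp add: cnj_sum)
  also have "\<dots> = (\<Sum>ch\<in>S. \<Sum>ps\<in>S. of_int (c ch) * ch x * (of_int (c ps) * cnj (ps x)))"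
    by (rule sum_product)
  also have "\<dots> = (\<Sum>p\<in>S\<times>S. of_int (c (fst p)) * fst p x * (of_int (c (snd p)) * cnj (snd p x)))"
    by (simp add: sum.cartesian_product case_prod_unfold)
  also have "\<dots> = (\<Sum>p\<in>S\<times>S. of_int (c (fst p) * c (snd p)) * (fst p x * cnj (snd p x)))"
    by (intro sum.cong refl) (simp add: ac_simps)
  finally show ?thesis .
qed

lemma shft_char: "ch \<in> S \<Longrightarrow> ps \<in> S \<Longrightarrow> character \<gamma> \<Longrightarrow> character (shft ch ps \<gamma>)"
  unfolding shft_def using charS by (intro character_mult character_cnj) auto

lemma char_integrable:
  assumes "character g" shows "integrable M (\<lambda>x. a * g x)"
proof (rule integrable_cont_bounded[where C="cmod a"])
  show "continuous_on UNIV (\<lambda>x. a * g x)" using char_cont[OF assms] by (intro continuous_intros)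
  show "cmod (a * g x) \<le> cmod a" for x by (simp add: norm_mult char_norm[OF assms])
qed

lemma Tint_integral:
  assumes g: "character \<gamma>" and g': "character \<gamma>'"
  shows "(\<integral>x. hc x * \<gamma>' x * cnj (\<gamma> x) \<partial>M) = of_int (Tint \<gamma> \<gamma>')"
proof -
  have eq: "(\<lambda>x. hc x * \<gamma>' x * cnj (\<gamma> x)) =
      (\<lambda>x. \<Sum>p\<in>S\<times>S. of_int (c (fst p) * c (snd p)) * (shft (fst p) (snd p) \<gamma>' x * cnj (\<gamma> x)))"
    unfolding hc_expand shft_def by (auto simp: sum_distrib_right sum_distrib_left ac_simps)
  have "(\<integral>x. hc x * \<gamma>' x * cnj (\<gamma> x) \<partial>M) =
      (\<integral>x. (\<Sum>p\<in>S\<times>S. of_int (c (fst p) * c (snd p)) * (shft (fst p) (snd p) \<gamma>' x * cnj (\<gamma> x))) \<partial>M)"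
    by (simp only: eq)
  also have "\<dots> = (\<Sum>p\<in>S\<times>S. \<integral>x. of_int (c (fst p) * c (snd p)) * (shft (fst p) (snd p) \<gamma>' x * cnj (\<gamma> x)) \<partial>M)"
  proof (rule Bochner_Integration.integral_sum[where f="\<lambda>p x. of_int (c (fst p) * c (snd p)) * (shft (fst p) (snd p) \<gamma>' x * cnj (\<gamma> x))"])
    fix p assume p: "p \<in> S \<times> S"
    have "character (\<lambda>x. shft (fst p) (snd p) \<gamma>' x * cnj (\<gamma> x))"
      using p by (intro character_mult character_cnj shft_char g g') auto
    from char_integrable[OF this] show "integrable M (\<lambda>x. of_int (c (fst p) * c (snd p)) * (shft (fst p) (snd p) \<gamma>' x * cnj (\<gamma> x)))" .
  qed
  also have "\<dots> = (\<Sum>p\<in>S\<times>S. of_int (c (fst p) * c (snd p)) * (if shft (fst p) (snd p) \<gamma>' = \<gamma> then 1 else 0))"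
  proof (intro sum.cong refl)
    fix p assume p: "p \<in> S \<times> S"
    have "character (shft (fst p) (snd p) \<gamma>')" using p by (intro shft_char g') auto
    then show "(\<integral>x. of_int (c (fst p) * c (snd p)) * (shft (fst p) (snd p) \<gamma>' x * cnj (\<gamma> x)) \<partial>M) =
       of_int (c (fst p) * c (snd p)) * (if shft (fst p) (snd p) \<gamma>' = \<gamma> then 1 else 0)"
      using orth[OF _ g] by simp
  qed
  also have "\<dots> = of_int (Tint \<gamma> \<gamma>')"
    unfolding Tint_def by (simp add: of_int_sum) (intro sum.cong refl, auto)
  finally show ?thesis .
qed

lemma expansion:
  assumes B: "finite B" and sh: "\<And>p. p \<in> S \<times> S \<Longrightarrow> shft (fst p) (snd p) \<gamma>' \<in> B"
  shows "(\<Sum>\<beta>\<in>B. of_int (Tint \<beta> \<gamma>') * \<beta> x) = hc x * \<gamma>' x"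
proof -
  have "(\<Sum>\<beta>\<in>B. of_int (Tint \<beta> \<gamma>') * \<beta> x) =
      (\<Sum>\<beta>\<in>B. \<Sum>p\<in>S\<times>S. (if shft (fst p) (snd p) \<gamma>' = \<beta> then of_int (c (fst p) * c (snd p)) * \<beta> x else 0))"
    unfolding Tint_def by (intro sum.cong refl) (auto simp: of_int_sum sum_distrib_right intro!: sum.cong)
  also have "\<dots> = (\<Sum>p\<in>S\<times>S. \<Sum>\<beta>\<in>B. (if shft (fst p) (snd p) \<gamma>' = \<beta> then of_int (c (fst p) * c (snd p)) * \<beta> x else 0))"
    by (rule sum.swap)
  also have "\<dots> = (\<Sum>p\<in>S\<times>S. of_int (c (fst p) * c (snd p)) * shft (fst p) (snd p) \<gamma>' x)"
    using B sh by (intro sum.cong refl) (simp add: sum.delta)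
  also have "\<dots> = hc x * \<gamma>' x"
    unfolding hc_expand shft_def by (auto simp: sum_distrib_right sum_distrib_left ac_simps)
  finally show ?thesis .
qed

lemma Tint_nz: "Tint \<beta> \<gamma>' \<noteq> 0 \<Longrightarrow> \<exists>p\<in>S\<times>S. shft (fst p) (snd p) \<gamma>' = \<beta>"
  unfolding Tint_def by (rule ccontr) (auto intro!: sum.neutral)

lemma col_bound:
  assumes B: "finite B"
  shows "(\<Sum>\<beta>\<in>B. real_of_int \<bar>Tint \<beta> \<gamma>'\<bar>) \<le> Cb"
proof -
  have "(\<Sum>\<beta>\<in>B. real_of_int \<bar>Tint \<beta> \<gamma>'\<bar>) \<le>
      (\<Sum>\<beta>\<in>B. \<Sum>p\<in>S\<times>S. (if shft (fst p) (snd p) \<gamma>' = \<beta> then real_of_int \<bar>c (fst p) * c (snd p)\<bar> else 0))"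
  proof (rule sum_mono)
    fix \<beta> assume "\<beta> \<in> B"
    have "real_of_int \<bar>Tint \<beta> \<gamma>'\<bar> = \<bar>\<Sum>p\<in>S\<times>S. real_of_int (c (fst p) * c (snd p) * (if shft (fst p) (snd p) \<gamma>' = \<beta> then 1 else 0))\<bar>"
      unfolding Tint_def by (simp only: of_int_abs of_int_sum)
    also have "\<dots> \<le> (\<Sum>p\<in>S\<times>S. \<bar>real_of_int (c (fst p) * c (snd p) * (if shft (fst p) (snd p) \<gamma>' = \<beta> then 1 else 0))\<bar>)"
      by (rule sum_abs)
    also have "\<dots> = (\<Sum>p\<in>S\<times>S. (if shft (fst p) (snd p) \<gamma>' = \<beta> then real_of_int \<bar>c (fst p) * c (snd p)\<bar> else 0))"
      by (intro sum.cong refl) auto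
    finally show "real_of_int \<bar>Tint \<beta> \<gamma>'\<bar> \<le> \<dots>" .
  qed
  also have "\<dots> = (\<Sum>p\<in>S\<times>S. \<Sum>\<beta>\<in>B. (if shft (fst p) (snd p) \<gamma>' = \<beta> then real_of_int \<bar>c (fst p) * c (snd p)\<bar> else 0))"
    by (rule sum.swap)
  also have "\<dots> \<le> (\<Sum>p\<in>S\<times>S. real_of_int \<bar>c (fst p) * c (snd p)\<bar>)"
    using B by (intro sum_mono) (simp add: sum.delta)
  also have "\<dots> = (\<Sum>ch\<in>S. \<Sum>ps\<in>S. real_of_int \<bar>c ch\<bar> * real_of_int \<bar>c ps\<bar>)"
    by (simp add: sum.cartesian_product case_prod_unfold abs_mult)
  also have "\<dots> = Cb" unfolding Cb_def by (simp add: sum_product power2_eq_square)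
  finally show ?thesis .
qed

end


context fsetup
begin

definition "Tm e N = mat N N (\<lambda>(i,j). Tint (e i) (e j))"
definition "Tc e N = (map_mat of_int (Tm e N) :: complex mat)"

lemma Tc_carrier: "Tc e N \<in> carrier_mat N N"
  unfolding Tc_def Tm_def by simp

lemma Tc_index: "l < N \<Longrightarrow> j < N \<Longrightarrow> Tc e N $$ (l,j) = of_int (Tint (e l) (e j))"
  unfolding Tc_def Tm_def by simp

lemma mult_entry:
  assumes A: "A \<in> carrier_mat N N" and B: "B \<in> carrier_mat N N" and i: "i < N" and j: "j < N"
  shows "(A * B) $$ (i,j) = (\<Sum>l<N. A $$ (i,l) * B $$ (l,j))"
  using A B i j by (auto simp: scalar_prod_def atLeast0LessThan intro!: sum.cong)

lemma char_unit: "ch \<in> S \<Longrightarrow> cmod (ch x) = 1"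
  using char_norm[OF charS] .

lemma shft_Bx: "p \<in> S \<times> S \<Longrightarrow> \<gamma> \<in> Bx S m \<Longrightarrow> shft (fst p) (snd p) \<gamma> \<in> Bx S (Suc m)"
proof -
  assume p: "p \<in> S \<times> S" and g: "\<gamma> \<in> Bx S m"
  have "(\<lambda>x. fst p x * cnj (snd p x) * \<gamma> x) \<in> Bx S (Suc m)"
    by (rule Bx_shift) (use p g char_unit finS in auto)
  then show ?thesis unfolding shft_def .
qed

lemma integ_hck:
  assumes b: "character \<beta>" and g: "character \<gamma>"
  shows "integrable M (\<lambda>x. (hc x)^k * \<beta> x * cnj (\<gamma> x))"
proof (rule integrable_cont_bounded[where C="Cb^k"])
  show "continuous_on UNIV (\<lambda>x. (hc x)^k * \<beta> x * cnj (\<gamma> x))"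
    using char_cont[OF b] char_cont[OF g] hc_cont by (intro continuous_intros) auto
  fix x
  have "cmod ((hc x)^k * \<beta> x * cnj (\<gamma> x)) = (hr x)^k"
    using char_norm[OF b] char_norm[OF g] hr_bound(1)[of x]
    by (simp add: norm_mult norm_power hc_hr)
  also have "\<dots> \<le> Cb^k" using hr_bound[of x] by (intro power_mono) auto
  finally show "cmod ((hc x)^k * \<beta> x * cnj (\<gamma> x)) \<le> Cb^k" .
qed

lemma pow_entries:
  assumes bij: "bij_betw e {..<N} (Bx S n)"
  shows "k \<le> n \<Longrightarrow> i < N \<Longrightarrow> j < N \<Longrightarrow> e j \<in> Bx S (n - k) \<Longrightarrow>
    (Tc e N ^\<^sub>m k) $$ (i,j) = (\<integral>x. (hc x)^k * e j x * cnj (e i x) \<partial>M)"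
proof (induction k arbitrary: j)
  have eB: "l < N \<Longrightarrow> e l \<in> Bx S n" for l using bij by (auto simp: bij_betw_def)
  have ec: "l < N \<Longrightarrow> character (e l)" for l using eB Bx_char[OF charS] by blast
  case 0
  have "(Tc e N ^\<^sub>m 0) $$ (i,j) = (if i = j then 1 else 0)"
    using 0 Tc_carrier[of e N] by simp
  also have "\<dots> = (if e j = e i then 1 else 0)"
    using bij 0 by (auto simp: bij_betw_def inj_on_def)
  also have "\<dots> = (\<integral>x. e j x * cnj (e i x) \<partial>M)"
    using orth[OF ec ec] 0 by simp
  finally show ?case by simp
next
  have eB: "l < N \<Longrightarrow> e l \<in> Bx S n" for l using bij by (auto simp: bij_betw_def)
  have ec: "l < N \<Longrightarrow> character (e l)" for l using eB Bx_char[OF charS] by blast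
  case (Suc k)
  note k = Suc.prems(1) and i = Suc.prems(2) and j = Suc.prems(3) and ej = Suc.prems(4)
  have TkC: "Tc e N ^\<^sub>m k \<in> carrier_mat N N" using Tc_carrier by simp
  have "(Tc e N ^\<^sub>m Suc k) $$ (i,j) = (\<Sum>l<N. (Tc e N ^\<^sub>m k) $$ (i,l) * Tc e N $$ (l,j))"
    using mult_entry[OF TkC Tc_carrier i j] by simp
  also have "\<dots> = (\<Sum>l<N. (\<integral>x. (hc x)^k * e l x * cnj (e i x) \<partial>M) * of_int (Tint (e l) (e j)))"
  proof (intro sum.cong refl)
    fix l assume l: "l \<in> {..<N}"
    show "(Tc e N ^\<^sub>m k) $$ (i,l) * Tc e N $$ (l,j) = (\<integral>x. (hc x)^k * e l x * cnj (e i x) \<partial>M) * of_int (Tint (e l) (e j))"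
    proof (cases "Tint (e l) (e j) = 0")
      case True then show ?thesis using Tc_index[of l N j e] l j by simp
    next
      case False
      then obtain p where p: "p \<in> S \<times> S" and el: "shft (fst p) (snd p) (e j) = e l"
        using Tint_nz by blast
      have "e l \<in> Bx S (Suc (n - Suc k))" using shft_Bx[OF p ej] el by simp
      moreover have "Suc (n - Suc k) = n - k" using k by simp
      ultimately have "e l \<in> Bx S (n - k)" by simp
      then have "(Tc e N ^\<^sub>m k) $$ (i,l) = (\<integral>x. (hc x)^k * e l x * cnj (e i x) \<partial>M)"
        using Suc.IH[of l] k i l by simp
      then show ?thesis using Tc_index[of l N j e] l j by simp
    qed
  qed
  also have "\<dots> = (\<Sum>\<beta>\<in>Bx S n. (\<integral>x. (hc x)^k * \<beta> x * cnj (e i x) \<partial>M) * of_int (Tint \<beta> (e j)))"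
    by (rule sum.reindex_bij_betw[OF bij, where g="\<lambda>\<beta>. (\<integral>x. (hc x)^k * \<beta> x * cnj (e i x) \<partial>M) * of_int (Tint \<beta> (e j))"])
  also have "\<dots> = (\<Sum>\<beta>\<in>Bx S n. \<integral>x. of_int (Tint \<beta> (e j)) * ((hc x)^k * \<beta> x * cnj (e i x)) \<partial>M)"
    by (simp add: mult.commute)
  also have "\<dots> = (\<integral>x. (\<Sum>\<beta>\<in>Bx S n. of_int (Tint \<beta> (e j)) * ((hc x)^k * \<beta> x * cnj (e i x))) \<partial>M)"
  proof (rule Bochner_Integration.integral_sum[symmetric, where f="\<lambda>\<beta> x. of_int (Tint \<beta> (e j)) * ((hc x)^k * \<beta> x * cnj (e i x))"])
    fix \<beta> assume "\<beta> \<in> Bx S n"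
    then have "character \<beta>" using Bx_char[OF charS] by blast
    from integ_hck[OF this ec[OF i]] show "integrable M (\<lambda>x. of_int (Tint \<beta> (e j)) * ((hc x)^k * \<beta> x * cnj (e i x)))"
      by simp
  qed
  also have "\<dots> = (\<integral>x. (hc x)^k * cnj (e i x) * (\<Sum>\<beta>\<in>Bx S n. of_int (Tint \<beta> (e j)) * \<beta> x) \<partial>M)"
    by (simp add: sum_distrib_left ac_simps)
  also have "\<dots> = (\<integral>x. (hc x)^k * cnj (e i x) * (hc x * e j x) \<partial>M)"
  proof -
    have "(\<Sum>\<beta>\<in>Bx S n. of_int (Tint \<beta> (e j)) * \<beta> x) = hc x * e j x" for x
    proof (rule expansion[OF Bx_finite[OF finS]])
      fix p assume p: "p \<in> S \<times> S"
      have "shft (fst p) (snd p) (e j) \<in> Bx S (Suc (n - Suc k))" by (rule shft_Bx[OF p ej])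
      moreover have "Bx S (Suc (n - Suc k)) \<subseteq> Bx S n" using k by (intro Bx_mono) simp
      ultimately show "shft (fst p) (snd p) (e j) \<in> Bx S n" by blast
    qed
    then show ?thesis by simp
  qed
  also have "\<dots> = (\<integral>x. (hc x)^Suc k * e j x * cnj (e i x) \<partial>M)"
    by (simp add: ac_simps)
  finally show ?case .
qed

end


context fsetup
begin

lemma entry_bound:
  assumes bij: "bij_betw e {..<N} (Bx S n)"
  shows "i < N \<Longrightarrow> j < N \<Longrightarrow> cmod ((Tc e N ^\<^sub>m k) $$ (i,j)) \<le> Cb^k"
proof (induction k arbitrary: j)
  case 0
  then show ?case using Tc_carrier[of e N] by simp
next
  case (Suc k)
  note i = Suc.prems(1) and j = Suc.prems(2)
  have TkC: "Tc e N ^\<^sub>m k \<in> carrier_mat N N" using Tc_carrier by simp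
  have "cmod ((Tc e N ^\<^sub>m Suc k) $$ (i,j)) = cmod (\<Sum>l<N. (Tc e N ^\<^sub>m k) $$ (i,l) * Tc e N $$ (l,j))"
    using mult_entry[OF TkC Tc_carrier i j] by simp
  also have "\<dots> \<le> (\<Sum>l<N. cmod ((Tc e N ^\<^sub>m k) $$ (i,l) * Tc e N $$ (l,j)))"
    by (rule norm_sum)
  also have "\<dots> \<le> (\<Sum>l<N. Cb^k * real_of_int \<bar>Tint (e l) (e j)\<bar>)"
  proof (intro sum_mono)
    fix l assume l: "l \<in> {..<N}"
    have "cmod ((Tc e N ^\<^sub>m k) $$ (i,l) * Tc e N $$ (l,j)) = cmod ((Tc e N ^\<^sub>m k) $$ (i,l)) * real_of_int \<bar>Tint (e l) (e j)\<bar>"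
      using Tc_index[of l N j e] l j by (simp add: norm_mult)
    also have "\<dots> \<le> Cb^k * real_of_int \<bar>Tint (e l) (e j)\<bar>"
      using Suc.IH[of l] i l by (intro mult_right_mono) auto
    finally show "cmod ((Tc e N ^\<^sub>m k) $$ (i,l) * Tc e N $$ (l,j)) \<le> Cb^k * real_of_int \<bar>Tint (e l) (e j)\<bar>" .
  qed
  also have "\<dots> = Cb^k * (\<Sum>l<N. real_of_int \<bar>Tint (e l) (e j)\<bar>)"
    by (simp only: sum_distrib_left)
  also have "(\<Sum>l<N. real_of_int \<bar>Tint (e l) (e j)\<bar>) = (\<Sum>\<beta>\<in>Bx S n. real_of_int \<bar>Tint \<beta> (e j)\<bar>)"
    by (rule sum.reindex_bij_betw[OF bij])
  also have "Cb^k * (\<Sum>\<beta>\<in>Bx S n. real_of_int \<bar>Tint \<beta> (e j)\<bar>) \<le> Cb^k * Cb"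
    using col_bound[OF Bx_finite[OF finS]] Cb_nonneg by (intro mult_left_mono) auto
  finally show ?case by (simp add: mult.commute)
qed

lemma bilin:
  fixes v :: "complex Matrix.vec"
  assumes bij: "bij_betw e {..<N} (Bx S n)"
    and w: "continuous_on UNIV w" "\<And>x. cmod (w x) \<le> W"
  shows "(\<Sum>i<N. \<Sum>j<N. cnj (v$i) * v$j * (\<integral>x. w x * e j x * cnj (e i x) \<partial>M))
    = (\<integral>x. w x * ((\<Sum>j<N. v$j * e j x) * cnj (\<Sum>j<N. v$j * e j x)) \<partial>M)"
proof -
  have eB: "l < N \<Longrightarrow> e l \<in> Bx S n" for l using bij by (auto simp: bij_betw_def)
  have ec: "l < N \<Longrightarrow> character (e l)" for l using eB Bx_char[OF charS] by blast
  have int1: "integrable M (\<lambda>x. a * (w x * e j x * cnj (e i x)))" if "i < N" "j < N" for a i j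
  proof (rule integrable_cont_bounded[where C="cmod a * W"])
    show "continuous_on UNIV (\<lambda>x. a * (w x * e j x * cnj (e i x)))"
      using w(1) char_cont[OF ec[OF that(1)]] char_cont[OF ec[OF that(2)]] by (intro continuous_intros) auto
    show "cmod (a * (w x * e j x * cnj (e i x))) \<le> cmod a * W" for x
      using w(2)[of x] char_norm[OF ec[OF that(1)]] char_norm[OF ec[OF that(2)]]
      by (simp add: norm_mult mult_left_mono)
  qed
  have "(\<lambda>x. w x * ((\<Sum>j<N. v$j * e j x) * cnj (\<Sum>j<N. v$j * e j x))) =
      (\<lambda>x. \<Sum>i<N. \<Sum>j<N. cnj (v$i) * v$j * (w x * e j x * cnj (e i x)))"
    by (auto simp: cnj_sum sum_distrib_left sum_distrib_right ac_simps intro!: ext sum.cong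
        | subst sum.swap)+
  then have "(\<integral>x. w x * ((\<Sum>j<N. v$j * e j x) * cnj (\<Sum>j<N. v$j * e j x)) \<partial>M) =
      (\<integral>x. (\<Sum>i<N. \<Sum>j<N. cnj (v$i) * v$j * (w x * e j x * cnj (e i x))) \<partial>M)"
    by simp
  also have "\<dots> = (\<Sum>i<N. \<integral>x. (\<Sum>j<N. cnj (v$i) * v$j * (w x * e j x * cnj (e i x))) \<partial>M)"
    by (rule Bochner_Integration.integral_sum[where f="\<lambda>i x. \<Sum>j<N. cnj (v$i) * v$j * (w x * e j x * cnj (e i x))"])
       (auto intro!: Bochner_Integration.integrable_sum int1)
  also have "\<dots> = (\<Sum>i<N. \<Sum>j<N. \<integral>x. cnj (v$i) * v$j * (w x * e j x * cnj (e i x)) \<partial>M)"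
    by (intro sum.cong refl Bochner_Integration.integral_sum[where f="\<lambda>j x. cnj (v$_) * v$j * (w x * e j x * cnj (e _ x))"])
       (auto intro!: int1)
  also have "\<dots> = (\<Sum>i<N. \<Sum>j<N. cnj (v$i) * v$j * (\<integral>x. w x * e j x * cnj (e i x) \<partial>M))"
    by simp
  finally show ?thesis by simp
qed

lemma hr_integrable: "integrable M (\<lambda>x. (hr x)^k)"
  by (rule integrable_cont_bounded[where C="Cb^k"])
     (use hr_cont hr_bound in \<open>auto intro!: continuous_intros power_mono\<close>)

lemma hr_int_bound: "0 \<le> (\<integral>x. (hr x)^k \<partial>M)" "(\<integral>x. (hr x)^k \<partial>M) \<le> Cb^k"
proof -
  interpret prob_space M by (rule probM)
  show "0 \<le> (\<integral>x. (hr x)^k \<partial>M)" using hr_bound by (intro Bochner_Integration.integral_nonneg) auto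
  have "(\<integral>x. (hr x)^k \<partial>M) \<le> (\<integral>x. Cb^k \<partial>M)"
    using hr_integrable hr_bound by (intro integral_mono) (auto intro!: power_mono)
  also have "\<dots> = Cb^k" using prob_space by simp
  finally show "(\<integral>x. (hr x)^k \<partial>M) \<le> Cb^k" .
qed

lemma quad:
  fixes v :: "complex Matrix.vec"
  assumes bij: "bij_betw e {..<N} (Bx S n)" and v: "v \<in> carrier_vec N"
  shows "\<exists>r. (\<Sum>i<N. cnj (v$i) * (Tc e N *\<^sub>v v)$i) = complex_of_real r \<and> 0 \<le> r \<and> r \<le> Cb * (\<Sum>i<N. (cmod (v$i))\<^sup>2)"
proof -
  have eB: "l < N \<Longrightarrow> e l \<in> Bx S n" for l using bij by (auto simp: bij_betw_def)
  have ec: "l < N \<Longrightarrow> character (e l)" for l using eB Bx_char[OF charS] by blast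
  define u where "u = (\<lambda>x. \<Sum>j<N. v$j * e j x)"
  have ucont: "continuous_on UNIV u" unfolding u_def
    by (intro continuous_intros char_cont ec) auto
  have ubnd: "cmod (u x) \<le> (\<Sum>j<N. cmod (v$j))" for x
  proof -
    have "cmod (u x) \<le> (\<Sum>j<N. cmod (v$j * e j x))" unfolding u_def by (rule norm_sum)
    also have "\<dots> = (\<Sum>j<N. cmod (v$j))" by (intro sum.cong refl) (simp add: norm_mult char_norm[OF ec])
    finally show ?thesis .
  qed
  have usq: "u x * cnj (u x) = complex_of_real ((cmod (u x))\<^sup>2)" for x
    using complex_norm_square[of "u x"] by simp
  have Tv: "(Tc e N *\<^sub>v v)$i = (\<Sum>j<N. (\<integral>x. hc x * e j x * cnj (e i x) \<partial>M) * v$j)" if i: "i < N" for i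
  proof -
    have "(Tc e N *\<^sub>v v)$i = (\<Sum>j<N. Tc e N $$ (i,j) * v$j)"
      using i v Tc_carrier[of e N] by (auto simp: scalar_prod_def atLeast0LessThan intro!: sum.cong)
    also have "\<dots> = (\<Sum>j<N. (\<integral>x. hc x * e j x * cnj (e i x) \<partial>M) * v$j)"
      by (intro sum.cong refl) (simp add: Tc_index i Tint_integral[OF ec ec])
    finally show ?thesis .
  qed
  have "(\<Sum>i<N. cnj (v$i) * (Tc e N *\<^sub>v v)$i) =
      (\<Sum>i<N. \<Sum>j<N. cnj (v$i) * v$j * (\<integral>x. hc x * e j x * cnj (e i x) \<partial>M))"
    by (intro sum.cong refl) (simp add: Tv sum_distrib_left ac_simps)
  also have "\<dots> = (\<integral>x. hc x * (u x * cnj (u x)) \<partial>M)"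
    unfolding u_def
    by (rule bilin[OF bij hc_cont, where W=Cb]) (simp add: hc_hr hr_bound(1) hr_bound(2))
  also have "\<dots> = (\<integral>x. complex_of_real (hr x * (cmod (u x))\<^sup>2) \<partial>M)"
    by (simp add: usq hc_hr)
  also have "\<dots> = complex_of_real (\<integral>x. hr x * (cmod (u x))\<^sup>2 \<partial>M)" by (rule integral_complex_of_real)
  finally have eq1: "(\<Sum>i<N. cnj (v$i) * (Tc e N *\<^sub>v v)$i) = complex_of_real (\<integral>x. hr x * (cmod (u x))\<^sup>2 \<partial>M)" .
  have "complex_of_real (\<integral>x. (cmod (u x))\<^sup>2 \<partial>M) = (\<integral>x. complex_of_real ((cmod (u x))\<^sup>2) \<partial>M)"
    by (rule integral_complex_of_real[symmetric])
  also have "\<dots> = (\<integral>x. 1 * (u x * cnj (u x)) \<partial>M)"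
    by (simp add: usq)
  also have "\<dots> = (\<Sum>i<N. \<Sum>j<N. cnj (v$i) * v$j * (\<integral>x. 1 * e j x * cnj (e i x) \<partial>M))"
    unfolding u_def
    by (rule bilin[OF bij, where W=1, symmetric]) auto
  also have "\<dots> = (\<Sum>i<N. \<Sum>j<N. if i = j then cnj (v$i) * v$j else 0)"
  proof (intro sum.cong refl)
    fix i j assume i: "i \<in> {..<N}" and j: "j \<in> {..<N}"
    have "(e j = e i) = (j = i)" using bij i j by (auto simp: bij_betw_def inj_on_def)
    then show "cnj (v$i) * v$j * (\<integral>x. 1 * e j x * cnj (e i x) \<partial>M) = (if i = j then cnj (v$i) * v$j else 0)"
      using orth[OF ec ec] i j by auto
  qed
  also have "\<dots> = (\<Sum>i<N. cnj (v$i) * v$i)"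
    by (intro sum.cong refl) (simp add: sum.delta)
  also have "\<dots> = (\<Sum>i<N. complex_of_real ((cmod (v$i))\<^sup>2))"
  proof (intro sum.cong refl)
    fix i
    show "cnj (v$i) * v$i = complex_of_real ((cmod (v$i))\<^sup>2)"
      using complex_norm_square[of "v$i"] by (simp add: mult.commute)
  qed
  also have "\<dots> = complex_of_real (\<Sum>i<N. (cmod (v$i))\<^sup>2)" by simp
  finally have eq2: "(\<integral>x. (cmod (u x))\<^sup>2 \<partial>M) = (\<Sum>i<N. (cmod (v$i))\<^sup>2)" by (simp only: of_real_eq_iff)
  have iu: "integrable M (\<lambda>x. (cmod (u x))\<^sup>2)"
    by (rule integrable_cont_bounded[where C="(\<Sum>j<N. cmod (v$j))\<^sup>2"])
       (use ucont ubnd in \<open>auto intro!: continuous_intros power_mono\<close>)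
  have ihu: "integrable M (\<lambda>x. hr x * (cmod (u x))\<^sup>2)"
    by (rule integrable_cont_bounded[where C="Cb * (\<Sum>j<N. cmod (v$j))\<^sup>2"])
       (use ucont ubnd hr_cont hr_bound Cb_nonneg in \<open>auto intro!: continuous_intros mult_mono power_mono simp: abs_mult\<close>)
  have r0: "0 \<le> (\<integral>x. hr x * (cmod (u x))\<^sup>2 \<partial>M)"
    using hr_bound by (intro Bochner_Integration.integral_nonneg) auto
  have "(\<integral>x. hr x * (cmod (u x))\<^sup>2 \<partial>M) \<le> (\<integral>x. Cb * (cmod (u x))\<^sup>2 \<partial>M)"
    using ihu iu hr_bound by (intro integral_mono mult_right_mono) auto
  also have "\<dots> = Cb * (\<Sum>i<N. (cmod (v$i))\<^sup>2)" using eq2 by simp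
  finally show ?thesis using eq1 r0 by blast
qed

lemma trace_approx:
  assumes bij: "bij_betw e {..<N} (Bx S n)" and k: "k \<le> n"
  shows "\<bar>Re (mtrace (Tc e N ^\<^sub>m k)) - real N * (\<integral>x. (hr x)^k \<partial>M)\<bar>
      \<le> real (card (Bx S n - Bx S (n-k))) * (2 * Cb^k)"
proof -
  have eB: "l < N \<Longrightarrow> e l \<in> Bx S n" for l using bij by (auto simp: bij_betw_def)
  have ec: "l < N \<Longrightarrow> character (e l)" for l using eB Bx_char[OF charS] by blast
  define I where "I = (\<integral>x. (hr x)^k \<partial>M)"
  have "Re (mtrace (Tc e N ^\<^sub>m k)) - real N * I = (\<Sum>i<N. Re ((Tc e N ^\<^sub>m k) $$ (i,i)) - I)"
    unfolding mtrace_def using Tc_carrier[of e N] by (simp add: sum_subtractf)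
  also have "\<bar>\<dots>\<bar> \<le> (\<Sum>i<N. \<bar>Re ((Tc e N ^\<^sub>m k) $$ (i,i)) - I\<bar>)" by (rule sum_abs)
  also have "\<dots> \<le> (\<Sum>i<N. if e i \<in> Bx S (n-k) then 0 else 2 * Cb^k)"
  proof (intro sum_mono)
    fix i assume i: "i \<in> {..<N}"
    show "\<bar>Re ((Tc e N ^\<^sub>m k) $$ (i,i)) - I\<bar> \<le> (if e i \<in> Bx S (n-k) then 0 else 2 * Cb^k)"
    proof (cases "e i \<in> Bx S (n-k)")
      case True
      have "(Tc e N ^\<^sub>m k) $$ (i,i) = (\<integral>x. (hc x)^k * e i x * cnj (e i x) \<partial>M)"
        using pow_entries[OF bij k] i True by simp
      also have "\<dots> = (\<integral>x. complex_of_real ((hr x)^k) \<partial>M)"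
        using char_cnj_mult[OF ec] i by (simp add: hc_hr mult.assoc)
      also have "\<dots> = complex_of_real I" unfolding I_def by (rule integral_complex_of_real)
      finally show ?thesis using True by simp
    next
      case False
      have "\<bar>Re ((Tc e N ^\<^sub>m k) $$ (i,i))\<bar> \<le> Cb^k"
        using entry_bound[OF bij, of i i k] i abs_Re_le_cmod order_trans by blast
      moreover have "\<bar>I\<bar> \<le> Cb^k" unfolding I_def using hr_int_bound by simp
      ultimately show ?thesis using False by simp
    qed
  qed
  also have "\<dots> = (\<Sum>i\<in>{i\<in>{..<N}. e i \<notin> Bx S (n-k)}. 2 * Cb^k)"
    by (rule sum.mono_neutral_cong_right) auto
  also have "\<dots> = real (card {i\<in>{..<N}. e i \<notin> Bx S (n-k)}) * (2 * Cb^k)" by simp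
  also have "card {i\<in>{..<N}. e i \<notin> Bx S (n-k)} = card (Bx S n - Bx S (n-k))"
  proof -
    have "bij_betw e {i\<in>{..<N}. e i \<notin> Bx S (n-k)} (Bx S n - Bx S (n-k))"
      using bij unfolding bij_betw_def inj_on_def by auto
    then show ?thesis by (rule bij_betw_same_card)
  qed
  finally show ?thesis unfolding I_def .
qed

end


context fsetup
begin

lemma eig_data:
  "\<exists>as::real list. length as = card (Bx S n) \<and> (\<forall>a\<in>set as. 0 \<le> a \<and> a \<le> Cb) \<and>
     1 \<le> prod_list (filter (\<lambda>a. a \<noteq> 0) as) \<and>
     (\<forall>k\<le>n. \<bar>(\<Sum>a\<leftarrow>as. a^k) - real (card (Bx S n)) * (\<integral>x. (hr x)^k \<partial>M)\<bar>
        \<le> real (card (Bx S n - Bx S (n-k))) * (2 * Cb^k))"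
proof -
  define N where "N = card (Bx S n)"
  obtain e where bij0: "bij_betw e {0..<N} (Bx S n)"
    using ex_bij_betw_nat_finite[OF Bx_finite[OF finS]] unfolding N_def by blast
  have bij: "bij_betw e {..<N} (Bx S n)" using bij0 by (simp add: atLeast0LessThan)
  have T: "Tm e N \<in> carrier_mat N N" unfolding Tm_def by simp
  obtain as where las: "length as = N" and bnd: "\<forall>a\<in>set as. 0 \<le> a \<and> a \<le> Cb"
    and tr: "\<forall>k. (\<Sum>a\<leftarrow>as. a^k) = Re (mtrace ((map_mat of_int (Tm e N) :: complex mat) ^\<^sub>m k))"
    and pr: "1 \<le> prod_list (filter (\<lambda>a. a \<noteq> 0) as)"
    using spectral_data[OF T, of Cb] quad[OF bij] unfolding Tc_def by blast
  have "\<forall>k\<le>n. \<bar>(\<Sum>a\<leftarrow>as. a^k) - real N * (\<integral>x. (hr x)^k \<partial>M)\<bar>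
        \<le> real (card (Bx S n - Bx S (n-k))) * (2 * Cb^k)"
    using trace_approx[OF bij] tr unfolding Tc_def by simp
  with las bnd pr show ?thesis unfolding N_def by blast
qed

lemma list_sum_swap:
  fixes as :: "real list" and f :: "nat \<Rightarrow> real \<Rightarrow> real"
  shows "(\<Sum>x\<leftarrow>as. \<Sum>i\<le>d. f i x) = (\<Sum>i\<le>d. \<Sum>x\<leftarrow>as. f i x)"
  by (induction as) (auto simp: sum.distrib)

lemma list_sum_mult:
  fixes as :: "real list" and a :: real and f :: "real \<Rightarrow> real"
  shows "(\<Sum>x\<leftarrow>as. a * f x) = a * (\<Sum>x\<leftarrow>as. f x)"
  by (induction as) (auto simp: algebra_simps)

lemma poly_hr_integrable: "integrable M (\<lambda>x. \<Sum>i\<le>d. a i * (hr x)^i)"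
  by (intro Bochner_Integration.integrable_sum integrable_mult_right hr_integrable)

lemma poly_approx:
  fixes a :: "nat \<Rightarrow> real"
  assumes as: "length as = card (Bx S n)"
    and tr: "\<forall>k\<le>n. \<bar>(\<Sum>a\<leftarrow>as. a^k) - real (card (Bx S n)) * (\<integral>x. (hr x)^k \<partial>M)\<bar>
        \<le> real (card (Bx S n - Bx S (n-k))) * (2 * Cb^k)"
    and dn: "d \<le> n"
  shows "\<bar>(\<Sum>x\<leftarrow>as. \<Sum>i\<le>d. a i * x^i) - real (card (Bx S n)) * (\<integral>x. (\<Sum>i\<le>d. a i * (hr x)^i) \<partial>M)\<bar>
     \<le> real (card (Bx S n - Bx S (n-d))) * (\<Sum>i\<le>d. \<bar>a i\<bar> * (2 * Cb^i))"
proof -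
  define N where "N = real (card (Bx S n))"
  define E where "E = real (card (Bx S n - Bx S (n-d)))"
  have "(\<integral>x. (\<Sum>i\<le>d. a i * (hr x)^i) \<partial>M) = (\<Sum>i\<le>d. a i * (\<integral>x. (hr x)^i \<partial>M))"
    by (subst Bochner_Integration.integral_sum) (auto intro!: integrable_mult_right hr_integrable)
  then have "(\<Sum>x\<leftarrow>as. \<Sum>i\<le>d. a i * x^i) - N * (\<integral>x. (\<Sum>i\<le>d. a i * (hr x)^i) \<partial>M)
      = (\<Sum>i\<le>d. a i * ((\<Sum>x\<leftarrow>as. x^i) - N * (\<integral>x. (hr x)^i \<partial>M)))"
    by (simp add: list_sum_swap list_sum_mult sum_distrib_left sum_subtractf algebra_simps)
  also have "\<bar>\<dots>\<bar> \<le> (\<Sum>i\<le>d. \<bar>a i * ((\<Sum>x\<leftarrow>as. x^i) - N * (\<integral>x. (hr x)^i \<partial>M))\<bar>)"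
    by (rule sum_abs)
  also have "\<dots> \<le> (\<Sum>i\<le>d. \<bar>a i\<bar> * (E * (2 * Cb^i)))"
  proof (intro sum_mono)
    fix i assume i: "i \<in> {..d}"
    have "\<bar>(\<Sum>x\<leftarrow>as. x^i) - N * (\<integral>x. (hr x)^i \<partial>M)\<bar> \<le> real (card (Bx S n - Bx S (n-i))) * (2 * Cb^i)"
      using tr dn i unfolding N_def by auto
    also have "\<dots> \<le> E * (2 * Cb^i)"
    proof (intro mult_right_mono)
      have "Bx S (n-d) \<subseteq> Bx S (n-i)" using i by (intro Bx_mono) auto
      then have "card (Bx S n - Bx S (n-i)) \<le> card (Bx S n - Bx S (n-d))"
        by (intro card_mono) (auto intro: Bx_finite finS)
      then show "real (card (Bx S n - Bx S (n-i))) \<le> E" unfolding E_def by simp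
    qed (use Cb_nonneg in simp)
    finally show "\<bar>a i * ((\<Sum>x\<leftarrow>as. x^i) - N * (\<integral>x. (hr x)^i \<partial>M))\<bar> \<le> \<bar>a i\<bar> * (E * (2 * Cb^i))"
      by (simp add: abs_mult mult_left_mono)
  qed
  also have "\<dots> = E * (\<Sum>i\<le>d. \<bar>a i\<bar> * (2 * Cb^i))"
    by (simp add: sum_distrib_left algebra_simps)
  finally show ?thesis unfolding N_def E_def .
qed

end


lemma sum_list_filter_split:
  "(\<Sum>a\<leftarrow>as. f a) = (\<Sum>a\<leftarrow>filter P as. f a) + (\<Sum>a\<leftarrow>filter (\<lambda>a. \<not> P a) as. (f a :: real))"
  by (induction as) auto

lemma sum_list_ln:
  fixes bs :: "real list"
  shows "(\<forall>a\<in>set bs. 0 < a) \<Longrightarrow> (\<Sum>a\<leftarrow>bs. ln a) = ln (prod_list bs)"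
proof (induction bs)
  case Nil then show ?case by simp
next
  case (Cons b bs)
  have p: "0 < prod_list bs" using Cons.prems by (induction bs) auto
  have b: "0 < b" using Cons.prems by simp
  have "(\<Sum>a\<leftarrow>b#bs. ln a) = ln b + (\<Sum>a\<leftarrow>bs. ln a)" by simp
  also have "\<dots> = ln b + ln (prod_list bs)" using Cons by simp
  also have "\<dots> = ln (b * prod_list bs)" using ln_mult_pos[OF b p] by simp
  finally show ?case by simp
qed

lemma sum_list_le:
  fixes f g :: "real \<Rightarrow> real"
  shows "(\<And>a. a \<in> set as \<Longrightarrow> f a \<le> g a) \<Longrightarrow> (\<Sum>a\<leftarrow>as. f a) \<le> (\<Sum>a\<leftarrow>as. g a)"
  by (induction as) (auto intro: add_mono)

lemma sum_list_minus_const: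
  fixes f :: "real \<Rightarrow> real"
  shows "(\<Sum>a\<leftarrow>as. f a - c) = (\<Sum>a\<leftarrow>as. f a) - real (length as) * c"
  by (induction as) (auto simp: algebra_simps)

lemma sum_list_plus_const:
  fixes f :: "real \<Rightarrow> real"
  shows "(\<Sum>a\<leftarrow>as. f a + c) = (\<Sum>a\<leftarrow>as. f a) + real (length as) * c"
  by (induction as) (auto simp: algebra_simps)

lemma ln_list:
  fixes as :: "real list"
  assumes nn: "\<forall>a\<in>set as. 0 \<le> a" and pr: "1 \<le> prod_list (filter (\<lambda>a. a \<noteq> 0) as)"
    and e: "0 < \<epsilon>"
  shows "real (length (filter (\<lambda>a. a = 0) as)) * ln \<epsilon> \<le> (\<Sum>a\<leftarrow>as. ln (a + \<epsilon>))"
proof -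
  have "(\<Sum>a\<leftarrow>as. ln (a + \<epsilon>)) = (\<Sum>a\<leftarrow>filter (\<lambda>a. a \<noteq> 0) as. ln (a + \<epsilon>)) + (\<Sum>a\<leftarrow>filter (\<lambda>a. \<not> a \<noteq> 0) as. ln (a + \<epsilon>))"
    by (rule sum_list_filter_split)
  moreover have "(\<Sum>a\<leftarrow>filter (\<lambda>a. \<not> a \<noteq> 0) as. ln (a + \<epsilon>)) = real (length (filter (\<lambda>a. a = 0) as)) * ln \<epsilon>"
    by (induction as) (auto simp: algebra_simps)
  moreover have "0 \<le> (\<Sum>a\<leftarrow>filter (\<lambda>a. a \<noteq> 0) as. ln (a + \<epsilon>))"
  proof -
    have pos: "\<forall>a\<in>set (filter (\<lambda>a. a \<noteq> 0) as). 0 < a" using nn by auto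
    have "0 \<le> ln (prod_list (filter (\<lambda>a. a \<noteq> 0) as))" using pr by simp
    also have "\<dots> = (\<Sum>a\<leftarrow>filter (\<lambda>a. a \<noteq> 0) as. ln a)" using sum_list_ln[OF pos] by simp
    also have "\<dots> \<le> (\<Sum>a\<leftarrow>filter (\<lambda>a. a \<noteq> 0) as. ln (a + \<epsilon>))"
      by (rule sum_list_le) (use pos e in auto)
    finally show ?thesis .
  qed
  ultimately show ?thesis by simp
qed

lemma eps_limit:
  fixes A B K :: real
  assumes h: "\<And>\<theta>. 0 < \<theta> \<Longrightarrow> A \<le> B + \<theta> * K" and K: "0 \<le> K"
  shows "A \<le> B"
proof (rule ccontr)
  assume "\<not> A \<le> B"
  then have AB: "0 < A - B" by simp
  define \<theta> where "\<theta> = (A - B) / (2 * (K + 1))"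
  have th: "0 < \<theta>" unfolding \<theta>_def using AB K by simp
  have "\<theta> * K \<le> \<theta> * (K + 1)" using th by simp
  also have "\<theta> * (K + 1) = (A - B) / 2" unfolding \<theta>_def using K by (simp add: field_simps)
  finally have "B + \<theta> * K < A" using AB by simp
  with h[OF th] show False by simp
qed

context fsetup
begin

lemma hr_sets: "{x. hr x < \<delta>} \<in> sets M"
proof -
  have "open {x. hr x < \<delta>}" by (rule open_Collect_less) (use hr_cont in \<open>auto intro: continuous_intros\<close>)
  then show ?thesis using setsM by simp
qed

lemma ln_integrable:
  assumes e: "0 < \<epsilon>"
  shows "integrable M (\<lambda>x. ln (hr x + \<epsilon>))"
proof (rule integrable_cont_bounded[where C="\<bar>ln \<epsilon>\<bar> + \<bar>ln (Cb + \<epsilon>)\<bar>"])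
  have nz: "hr x + \<epsilon> \<noteq> 0" for x using hr_bound(1)[of x] e by linarith
  show "continuous_on UNIV (\<lambda>x. ln (hr x + \<epsilon>))"
    using hr_cont nz by (intro continuous_intros) auto
  fix x
  have "ln \<epsilon> \<le> ln (hr x + \<epsilon>)" using hr_bound(1)[of x] e by simp
  moreover have "ln (hr x + \<epsilon>) \<le> ln (Cb + \<epsilon>)" using hr_bound[of x] e by simp
  ultimately show "norm (ln (hr x + \<epsilon>)) \<le> \<bar>ln \<epsilon>\<bar> + \<bar>ln (Cb + \<epsilon>)\<bar>" by auto
qed

end


lemma count_zero_le:
  fixes as :: "real list" and Q :: "real \<Rightarrow> real"
  shows "(\<forall>a\<in>set as. 0 \<le> Q a \<and> (a = 0 \<longrightarrow> 1 \<le> Q a)) \<Longrightarrow>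
    real (length (filter (\<lambda>a. a = 0) as)) \<le> (\<Sum>a\<leftarrow>as. Q a)"
  by (induction as) (auto intro: add_mono)

context fsetup
begin

lemma key:
  assumes e0: "0 < \<epsilon>" and e1: "\<epsilon> < 1" and d0: "0 < \<delta>" and h0: "0 < \<eta>"
  shows "(measure M {x. hr x < \<delta>} + 2*\<eta>) * ln \<epsilon> - 2*\<eta> \<le> (\<integral>x. ln (hr x + \<epsilon>) \<partial>M)"
proof -
  interpret prob_space M by (rule probM)
  have pU: "prob UNIV = 1" using prob_space by simp
  have lneg: "ln \<epsilon> < 0" using e0 e1 by simp
  have comp: "compact {0..Cb}" by simp
  have c1: "continuous_on {0..Cb} (\<lambda>t. ln (t + \<epsilon>))" using e0 by (intro continuous_intros) auto
  obtain p where pp: "real_polynomial_function p" and pa: "\<And>t. t \<in> {0..Cb} \<Longrightarrow> \<bar>ln (t + \<epsilon>) - p t\<bar> < \<eta>"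
    using Stone_Weierstrass_real_polynomial_function[OF comp c1 h0] by blast
  obtain ap dp where pdef: "p = (\<lambda>x. \<Sum>i\<le>dp. ap i * x^i)" using pp real_polynomial_function_iff_sum by blast
  define g where "g = (\<lambda>t::real. max 0 (1 - t/\<delta>))"
  have c2: "continuous_on {0..Cb} g" unfolding g_def using d0 by (intro continuous_intros) auto
  obtain q where qq: "real_polynomial_function q" and qa: "\<And>t. t \<in> {0..Cb} \<Longrightarrow> \<bar>g t - q t\<bar> < \<eta>"
    using Stone_Weierstrass_real_polynomial_function[OF comp c2 h0] by blast
  obtain aq dq where qdef: "q = (\<lambda>x. \<Sum>i\<le>dq. aq i * x^i)" using qq real_polynomial_function_iff_sum by blast
  define Kp where "Kp = (\<Sum>i\<le>dp. \<bar>ap i\<bar> * (2 * Cb^i))"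
  define Kq where "Kq = (\<Sum>i\<le>dq. \<bar>aq i\<bar> * (2 * Cb^i))"
  define Ip where "Ip = (\<integral>x. (\<Sum>i\<le>dp. ap i * (hr x)^i) \<partial>M)"
  define Iq where "Iq = (\<integral>x. (\<Sum>i\<le>dq. aq i * (hr x)^i) \<partial>M)"
  have Kp0: "0 \<le> Kp" unfolding Kp_def using Cb_nonneg by (intro sum_nonneg) auto
  have Kq0: "0 \<le> Kq" unfolding Kq_def using Cb_nonneg by (intro sum_nonneg) auto
  have main: "(Iq + \<eta>) * ln \<epsilon> - \<eta> \<le> Ip + \<theta> * (Kp - Kq * ln \<epsilon>)" if th: "0 < \<theta>" for \<theta>
  proof -
    define d where "d = max dp dq"
    obtain n where nd: "d \<le> n"
      and fo: "real (card (Bx S n)) - real (card (Bx S (n - d))) \<le> \<theta> * real (card (Bx S n))"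
      using folner[OF finS th, of d] by blast
    define N where "N = real (card (Bx S n))"
    have "0 < card (Bx S n)" using Bx_finite[OF finS, of n] Bx_nonempty[of S n] card_gt_0_iff by blast
    then have Npos: "0 < N" unfolding N_def by simp
    have E: "real (card (Bx S n - Bx S (n - d'))) \<le> \<theta> * N" if "d' \<le> d" for d'
    proof -
      have sub: "Bx S (n - d) \<subseteq> Bx S (n - d')" using that by (intro Bx_mono) auto
      have sub2: "Bx S (n - d) \<subseteq> Bx S n" by (intro Bx_mono) auto
      have "card (Bx S n - Bx S (n - d')) \<le> card (Bx S n - Bx S (n - d))"
        using sub by (intro card_mono) (auto intro: Bx_finite finS)
      also have "\<dots> = card (Bx S n) - card (Bx S (n - d))"
        using sub2 by (intro card_Diff_subset) (auto intro: Bx_finite finS)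
      finally have "real (card (Bx S n - Bx S (n - d'))) \<le> real (card (Bx S n) - card (Bx S (n - d)))"
        by (simp only: of_nat_le_iff)
      also have "\<dots> = real (card (Bx S n)) - real (card (Bx S (n - d)))"
        using card_mono[OF Bx_finite[OF finS] sub2] by (simp add: of_nat_diff)
      finally show ?thesis using fo unfolding N_def by simp
    qed
    obtain as :: "real list" where las: "length as = card (Bx S n)" and bnd: "\<forall>a\<in>set as. 0 \<le> a \<and> a \<le> Cb"
      and pr: "1 \<le> prod_list (filter (\<lambda>a. a \<noteq> 0) as)"
      and tr: "\<forall>k\<le>n. \<bar>(\<Sum>a\<leftarrow>as. a^k) - real (card (Bx S n)) * (\<integral>x. (hr x)^k \<partial>M)\<bar>
        \<le> real (card (Bx S n - Bx S (n-k))) * (2 * Cb^k)"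
      using eig_data[of n] by blast
    have P: "\<bar>(\<Sum>x\<leftarrow>as. p x) - N * Ip\<bar> \<le> \<theta> * N * Kp"
    proof -
      have "\<bar>(\<Sum>x\<leftarrow>as. p x) - N * Ip\<bar> \<le> real (card (Bx S n - Bx S (n-dp))) * Kp"
        using poly_approx[OF las tr, of dp ap] nd unfolding pdef Ip_def Kp_def N_def d_def by simp
      also have "\<dots> \<le> \<theta> * N * Kp" using E[of dp] Kp0 unfolding d_def by (intro mult_right_mono) auto
      finally show ?thesis .
    qed
    have Q: "\<bar>(\<Sum>x\<leftarrow>as. q x) - N * Iq\<bar> \<le> \<theta> * N * Kq"
    proof -
      have "\<bar>(\<Sum>x\<leftarrow>as. q x) - N * Iq\<bar> \<le> real (card (Bx S n - Bx S (n-dq))) * Kq"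
        using poly_approx[OF las tr, of dq aq] nd unfolding qdef Iq_def Kq_def N_def d_def by simp
      also have "\<dots> \<le> \<theta> * N * Kq" using E[of dq] Kq0 unfolding d_def by (intro mult_right_mono) auto
      finally show ?thesis .
    qed
    define z where "z = real (length (filter (\<lambda>a. a = 0) as))"
    have i: "z * ln \<epsilon> \<le> (\<Sum>a\<leftarrow>as. ln (a + \<epsilon>))"
      unfolding z_def by (rule ln_list) (use bnd pr e0 in auto)
    have ii: "z \<le> (\<Sum>a\<leftarrow>as. q a + \<eta>)"
      unfolding z_def
    proof (rule count_zero_le, intro ballI conjI impI)
      fix a assume a: "a \<in> set as"
      then have a0: "a \<in> {0..Cb}" using bnd by auto
      have "0 \<le> g a" unfolding g_def by simp
      then show "0 \<le> q a + \<eta>" using qa[OF a0] by linarith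
      assume "a = 0"
      then have "g a = 1" unfolding g_def by simp
      then show "1 \<le> q a + \<eta>" using qa[OF a0] by linarith
    qed
    have iii: "(\<Sum>a\<leftarrow>as. ln (a + \<epsilon>)) - N * \<eta> \<le> (\<Sum>a\<leftarrow>as. p a)"
    proof -
      have "(\<Sum>a\<leftarrow>as. ln (a + \<epsilon>) - \<eta>) \<le> (\<Sum>a\<leftarrow>as. p a)"
      proof (rule sum_list_le)
        fix a assume "a \<in> set as"
        then have "a \<in> {0..Cb}" using bnd by auto
        from pa[OF this] show "ln (a + \<epsilon>) - \<eta> \<le> p a" by linarith
      qed
      then show ?thesis using las unfolding N_def by (simp add: sum_list_minus_const)
    qed
    have qsum: "(\<Sum>a\<leftarrow>as. q a + \<eta>) = (\<Sum>a\<leftarrow>as. q a) + N * \<eta>"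
      using las unfolding N_def by (simp add: sum_list_plus_const)
    have "z \<le> N * Iq + \<theta> * N * Kq + N * \<eta>" using ii qsum Q by linarith
    then have "(N * Iq + \<theta> * N * Kq + N * \<eta>) * ln \<epsilon> \<le> z * ln \<epsilon>"
      using lneg by (intro mult_right_mono_neg) auto
    then have "N * ((Iq + \<theta> * Kq + \<eta>) * ln \<epsilon> - \<eta>) \<le> N * (Ip + \<theta> * Kp)"
      using i iii P by (simp add: algebra_simps)
    then have "(Iq + \<theta> * Kq + \<eta>) * ln \<epsilon> - \<eta> \<le> Ip + \<theta> * Kp"
      using Npos by simp
    then show ?thesis by (simp add: algebra_simps)
  qed
  have "Kq * ln \<epsilon> \<le> 0" using Kq0 lneg by (simp add: mult_nonneg_nonpos)
  then have K0: "0 \<le> Kp - Kq * ln \<epsilon>" using Kp0 by linarith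
  have A: "(Iq + \<eta>) * ln \<epsilon> - \<eta> \<le> Ip" using eps_limit[OF main K0] by simp
  have B: "Ip - \<eta> \<le> (\<integral>x. ln (hr x + \<epsilon>) \<partial>M)"
  proof -
    have "Ip - \<eta> = (\<integral>x. (\<Sum>i\<le>dp. ap i * (hr x)^i) - \<eta> \<partial>M)"
      unfolding Ip_def using poly_hr_integrable by (simp add: pU)
    also have "\<dots> \<le> (\<integral>x. ln (hr x + \<epsilon>) \<partial>M)"
    proof (rule integral_mono)
      show "integrable M (\<lambda>x. (\<Sum>i\<le>dp. ap i * (hr x)^i) - \<eta>)"
        using poly_hr_integrable by auto
      show "integrable M (\<lambda>x. ln (hr x + \<epsilon>))" using ln_integrable[OF e0] .
      fix x
      have "hr x \<in> {0..Cb}" using hr_bound[of x] by auto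
      from pa[OF this] show "(\<Sum>i\<le>dp. ap i * (hr x)^i) - \<eta> \<le> ln (hr x + \<epsilon>)"
        unfolding pdef by linarith
    qed
    finally show ?thesis .
  qed
  have C: "Iq \<le> measure M {x. hr x < \<delta>} + \<eta>"
  proof -
    have "Iq \<le> (\<integral>x. indicator {x. hr x < \<delta>} x + \<eta> \<partial>M)"
      unfolding Iq_def
    proof (rule integral_mono)
      show "integrable M (\<lambda>x. \<Sum>i\<le>dq. aq i * (hr x)^i)" by (rule poly_hr_integrable)
      show "integrable M (\<lambda>x. indicator {x. hr x < \<delta>} x + \<eta>)"
        using hr_sets by (intro Bochner_Integration.integrable_add integrable_const integrable_real_indicator)
          (auto simp: less_top[symmetric])
      fix x
      have hx: "hr x \<in> {0..Cb}" using hr_bound[of x] by auto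
      have "g (hr x) \<le> indicator {x. hr x < \<delta>} x"
      proof (cases "hr x < \<delta>")
        case True then show ?thesis unfolding g_def using hr_bound(1)[of x] d0 by simp
      next
        case False then have "1 \<le> hr x / \<delta>" using d0 by simp
        then show ?thesis unfolding g_def using False by simp
      qed
      with qa[OF hx] show "(\<Sum>i\<le>dq. aq i * (hr x)^i) \<le> indicator {x. hr x < \<delta>} x + \<eta>"
        unfolding qdef by linarith
    qed
    also have "\<dots> = (\<integral>x. indicator {x. hr x < \<delta>} x \<partial>M) + (\<integral>x. \<eta> \<partial>M)"
      using hr_sets by (intro Bochner_Integration.integral_add integrable_const integrable_real_indicator)
          (auto simp: less_top[symmetric])
    also have "\<dots> = measure M {x. hr x < \<delta>} + \<eta>"
      by (simp add: pU)
    finally show ?thesis .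
  qed
  have "(measure M {x. hr x < \<delta>} + 2*\<eta>) * ln \<epsilon> \<le> (Iq + \<eta>) * ln \<epsilon>"
    using C lneg by (intro mult_right_mono_neg) auto
  then show ?thesis using A B by linarith
qed

end


context fsetup
begin

lemma small_measure:
  assumes z: "emeasure M {x. fF x = 0} = 0" and t: "0 < \<tau>"
  shows "\<exists>\<delta>>0. measure M {x. hr x < \<delta>} < \<tau>"
proof -
  interpret prob_space M by (rule probM)
  define A where "A = (\<lambda>m::nat. {x. hr x < 1 / real (Suc m)})"
  have rA: "range A \<subseteq> sets M" unfolding A_def using hr_sets by auto
  have dA: "decseq A"
    unfolding A_def decseq_def
  proof (intro allI impI subsetI)
    fix m n :: nat and x assume mn: "m \<le> n" and x: "x \<in> {x. hr x < 1 / real (Suc n)}"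
    have "1 / real (Suc n) \<le> 1 / real (Suc m)" using mn by (simp add: frac_le)
    then show "x \<in> {x. hr x < 1 / real (Suc m)}" using x by simp
  qed
  have IA: "(\<Inter>i. A i) = {x. fF x = 0}"
  proof (rule equalityI; rule subsetI)
    fix x assume x: "x \<in> (\<Inter>i. A i)"
    show "x \<in> {x. fF x = 0}"
    proof (rule ccontr)
      assume "x \<notin> {x. fF x = 0}"
      then have "0 < hr x" unfolding hr_def by simp
      then obtain n where n: "n > 0" "inverse (real n) < hr x" using ex_inverse_of_nat_less by blast
      then have "1 / real (Suc (n - 1)) < hr x" by (simp add: inverse_eq_divide)
      moreover have "x \<in> A (n - 1)" using x by auto
      ultimately show False unfolding A_def by simp
    qed
  next
    fix x assume "x \<in> {x. fF x = 0}"
    then show "x \<in> (\<Inter>i. A i)" unfolding A_def hr_def by simp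
  qed
  have "(\<lambda>m. measure M (A m)) \<longlonglongrightarrow> measure M {x. fF x = 0}"
    using finite_Lim_measure_decseq[OF rA dA] IA by simp
  moreover have "measure M {x. fF x = 0} = 0" using z by (simp add: measure_def)
  ultimately have "(\<lambda>m. measure M (A m)) \<longlonglongrightarrow> 0" by simp
  from order_tendstoD(2)[OF this t] obtain m where "measure M (A m) < \<tau>"
    unfolding eventually_sequentially by blast
  then show ?thesis unfolding A_def by (intro exI[of _ "1 / real (Suc m)"]) auto
qed

lemma key0:
  assumes z: "emeasure M {x. fF x = 0} = 0" and e0: "0 < \<epsilon>" and e1: "\<epsilon> < 1"
  shows "0 \<le> (\<integral>x. ln (hr x + \<epsilon>) \<partial>M)"
proof (rule ccontr)
  define I where "I = (\<integral>x. ln (hr x + \<epsilon>) \<partial>M)"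
  define L where "L = - ln \<epsilon>"
  have L0: "0 < L" unfolding L_def using e0 e1 by simp
  assume "\<not> 0 \<le> (\<integral>x. ln (hr x + \<epsilon>) \<partial>M)"
  then have I0: "I < 0" unfolding I_def by simp
  define s where "s = (- I) / (4 * (L + 1))"
  have s0: "0 < s" unfolding s_def using I0 L0 by (intro divide_pos_pos) auto
  obtain \<delta> where d0: "0 < \<delta>" and md: "measure M {x. hr x < \<delta>} < s"
    using small_measure[OF z s0] by blast
  define \<mu> where "\<mu> = measure M {x. hr x < \<delta>}"
  have mu0: "0 \<le> \<mu>" unfolding \<mu>_def by simp
  have "(\<mu> + 2 * (s/2)) * ln \<epsilon> - 2 * (s/2) \<le> I"
    unfolding \<mu>_def I_def using key[OF e0 e1 d0, of "s/2"] s0 by simp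
  then have "- (\<mu> + s) * L - s \<le> I" unfolding L_def by (simp add: algebra_simps)
  moreover have "(\<mu> + s) * L < 2 * s * L" using md L0 unfolding \<mu>_def by simp
  moreover have "s * (2 * L + 1) < - I"
  proof -
    have "s * (2 * L + 1) = (- I) * ((2 * L + 1) / (4 * (L + 1)))" using L0 unfolding s_def by (simp add: field_simps)
    also have "\<dots> < (- I) * 1" using I0 L0 by (intro mult_strict_left_mono) (auto simp: field_simps)
    finally show ?thesis by simp
  qed
  ultimately show False by (simp add: algebra_simps)
qed

end


lemma ln_sq_bound:
  fixes t \<epsilon> :: real
  assumes t: "0 \<le> t" and e0: "0 < \<epsilon>" and e1: "\<epsilon> < 1"
  shows "max 0 (ln (t\<^sup>2 + \<epsilon>) / 2) \<le> max 0 (ln t) + \<epsilon> / 2"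
proof -
  have l1: "ln (1 + \<epsilon>) \<le> \<epsilon>" using e0 by (intro ln_add_one_self_le_self) simp
  consider "t = 0" | "0 < t" "t < 1" | "1 \<le> t" using t by linarith
  then show ?thesis
  proof cases
    case 1
    have "ln \<epsilon> < 0" using e0 e1 by simp
    then show ?thesis using 1 e0 by simp
  next
    case 2
    have "t\<^sup>2 \<le> 1" using 2 by (simp add: power_le_one)
    moreover have "0 < t\<^sup>2 + \<epsilon>" using e0 by (intro add_nonneg_pos) simp_all
    ultimately have "ln (t\<^sup>2 + \<epsilon>) \<le> ln (1 + \<epsilon>)" using e0 by (subst ln_le_cancel_iff) auto
    then have "ln (t\<^sup>2 + \<epsilon>) / 2 \<le> \<epsilon> / 2" using l1 by simp
    moreover have "ln t \<le> 0" using 2 by simp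
    ultimately show ?thesis using e0 by simp
  next
    case 3
    have tp: "0 < t" using 3 by simp
    have "t\<^sup>2 + \<epsilon> \<le> t\<^sup>2 * (1 + \<epsilon>)"
    proof -
      have "1 \<le> t\<^sup>2" using 3 by (simp add: one_le_power)
      then have "\<epsilon> \<le> t\<^sup>2 * \<epsilon>" using e0 by simp
      then show ?thesis by (simp add: algebra_simps)
    qed
    moreover have "0 < t\<^sup>2 + \<epsilon>" using e0 by (intro add_nonneg_pos) simp_all
    moreover have "0 < t\<^sup>2 * (1 + \<epsilon>)" using e0 tp by simp
    ultimately have "ln (t\<^sup>2 + \<epsilon>) \<le> ln (t\<^sup>2 * (1 + \<epsilon>))" by simp
    also have "\<dots> = 2 * ln t + ln (1 + \<epsilon>)" using tp e0 by (simp add: ln_mult_pos ln_realpow)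
    finally have "ln (t\<^sup>2 + \<epsilon>) / 2 \<le> ln t + \<epsilon> / 2" using l1 by simp
    moreover have "0 \<le> ln t" using 3 by simp
    ultimately show ?thesis using e0 by simp
  qed
qed

context fsetup
begin

definition "eps m = 1 / real (m + 2)"
definition "Lm m x = ln (hr x + eps m) / 2"
definition "Nm m x = ennreal (max 0 (- Lm m x))"
definition "Pm m x = ennreal (max 0 (Lm m x))"
definition "Pp x = ennreal (max 0 (ln (cmod (fF x))))"
definition "Nn x = (if fF x = 0 then \<infinity> else ennreal (max 0 (- ln (cmod (fF x)))))"

lemma eps_pos: "0 < eps m" and eps_lt1: "eps m < 1"
  unfolding eps_def by auto

lemma eps_mono: "m \<le> n \<Longrightarrow> eps n \<le> eps m"
  unfolding eps_def by (simp add: frac_le)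

lemma eps_small: "0 < e \<Longrightarrow> \<exists>m'\<ge>m. eps m' < e"
proof -
  assume e: "0 < e"
  obtain k where k: "k > 0" "inverse (real k) < e" using ex_inverse_of_nat_less[OF e] by blast
  have "eps (m + k) \<le> inverse (real k)" unfolding eps_def using k by (simp add: inverse_eq_divide frac_le)
  then show ?thesis using k by (intro exI[of _ "m + k"]) auto
qed

lemma Lm_integrable: "integrable M (Lm m)"
  unfolding Lm_def[abs_def] using ln_integrable[OF eps_pos] by simp

lemma Lm_int_nonneg:
  assumes H: "\<And>\<epsilon>. 0 < \<epsilon> \<Longrightarrow> \<epsilon> < 1 \<Longrightarrow> 0 \<le> (\<integral>x. ln (hr x + \<epsilon>) \<partial>M)"
  shows "0 \<le> (\<integral>x. Lm m x \<partial>M)"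
  unfolding Lm_def using H[OF eps_pos eps_lt1] by simp

lemma NP:
  assumes H: "\<And>\<epsilon>. 0 < \<epsilon> \<Longrightarrow> \<epsilon> < 1 \<Longrightarrow> 0 \<le> (\<integral>x. ln (hr x + \<epsilon>) \<partial>M)"
  shows "(\<integral>\<^sup>+x. Nm m x \<partial>M) \<le> (\<integral>\<^sup>+x. Pm m x \<partial>M)"
proof -
  have i1: "integrable M (\<lambda>x. max 0 (- Lm m x))" using Lm_integrable by auto
  have i2: "integrable M (\<lambda>x. max 0 (Lm m x))" using Lm_integrable by auto
  have "(\<integral>x. max 0 (Lm m x) \<partial>M) - (\<integral>x. max 0 (- Lm m x) \<partial>M) = (\<integral>x. max 0 (Lm m x) - max 0 (- Lm m x) \<partial>M)"
    using i1 i2 by simp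
  also have "\<dots> = (\<integral>x. Lm m x \<partial>M)" by (intro Bochner_Integration.integral_cong) auto
  finally have le: "(\<integral>x. max 0 (- Lm m x) \<partial>M) \<le> (\<integral>x. max 0 (Lm m x) \<partial>M)"
    using Lm_int_nonneg[OF H, of m] by simp
  have "(\<integral>\<^sup>+x. Nm m x \<partial>M) = ennreal (\<integral>x. max 0 (- Lm m x) \<partial>M)"
    unfolding Nm_def by (rule nn_integral_eq_integral[OF i1]) auto
  also have "\<dots> \<le> ennreal (\<integral>x. max 0 (Lm m x) \<partial>M)" using le by (rule ennreal_leI)
  also have "\<dots> = (\<integral>\<^sup>+x. Pm m x \<partial>M)"
    unfolding Pm_def by (rule nn_integral_eq_integral[OF i2, symmetric]) auto
  finally show ?thesis .
qed

lemma fF_meas[measurable]: "fF \<in> borel_measurable M"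
  using cont_meas[OF fF_cont] .

lemma Pp_meas: "Pp \<in> borel_measurable M"
  unfolding Pp_def by measurable

lemma Nm_meas: "Nm m \<in> borel_measurable M"
proof -
  have nz: "hr x + eps m \<noteq> 0" for x using hr_bound(1)[of x] eps_pos[of m] by linarith
  have "continuous_on UNIV (Nm m)"
    unfolding Nm_def[abs_def] Lm_def using hr_cont nz
    by (intro continuous_on_ennreal continuous_intros) auto
  then show ?thesis by (rule cont_meas)
qed

lemma Pm_Pp: "(\<integral>\<^sup>+x. Pm m x \<partial>M) \<le> (\<integral>\<^sup>+x. Pp x \<partial>M) + ennreal (eps m / 2)"
proof -
  interpret prob_space M by (rule probM)
  have "(\<integral>\<^sup>+x. Pm m x \<partial>M) \<le> (\<integral>\<^sup>+x. Pp x + ennreal (eps m / 2) \<partial>M)"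
  proof (rule nn_integral_mono)
    fix x
    have "max 0 (Lm m x) \<le> max 0 (ln (cmod (fF x))) + eps m / 2"
      unfolding Lm_def hr_def using ln_sq_bound[of "cmod (fF x)" "eps m"] eps_pos eps_lt1 by simp
    then have "ennreal (max 0 (Lm m x)) \<le> ennreal (max 0 (ln (cmod (fF x))) + eps m / 2)"
      by (rule ennreal_leI)
    also have "\<dots> = Pp x + ennreal (eps m / 2)"
      unfolding Pp_def using eps_pos[of m] by (simp add: ennreal_plus)
    finally show "Pm m x \<le> Pp x + ennreal (eps m / 2)" unfolding Pm_def .
  qed
  also have "\<dots> = (\<integral>\<^sup>+x. Pp x \<partial>M) + ennreal (eps m / 2)"
  proof -
    have "emeasure M UNIV = 1" using emeasure_space_1 by simp
    then show ?thesis using Pp_meas by (simp add: nn_integral_add)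
  qed
  finally show ?thesis .
qed

lemma Nm_inc: "incseq Nm"
proof (rule incseq_SucI, rule le_funI)
  fix m x
  have "ln (hr x + eps (Suc m)) \<le> ln (hr x + eps m)"
    using eps_mono[of m "Suc m"] eps_pos[of "Suc m"] hr_bound(1)[of x] by simp
  then show "Nm m x \<le> Nm (Suc m) x" unfolding Nm_def Lm_def by (intro ennreal_leI) simp
qed

lemma Nn_le_SUP: "Nn x \<le> (SUP m. Nm m x)"
proof (rule dense_le)
  fix y assume y: "y < Nn x"
  obtain r where r: "0 \<le> r" "y = ennreal r"
    using y by (cases y rule: ennreal_cases) auto
  have "\<exists>m. r < max 0 (- Lm m x)"
  proof (cases "fF x = 0")
    case True
    obtain n where "exp (2 * r) < real n" using reals_Archimedean2 by blast
    then have m: "exp (2 * r) < real (n + 2)" by simp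
    have "ln (exp (2 * r)) < ln (real (n + 2))" using m by (subst ln_less_cancel_iff) auto
    then have lt: "2 * r < ln (real (n + 2))" by simp
    have "ln (eps n) = - ln (real (n + 2))" unfolding eps_def by (simp add: ln_div)
    moreover have "hr x = 0" using True unfolding hr_def by simp
    ultimately have "r < max 0 (- Lm n x)" unfolding Lm_def using lt by simp
    then show ?thesis by blast
  next
    case False
    define t where "t = cmod (fF x)"
    have t0: "0 < t" unfolding t_def using False by simp
    have "Nn x = ennreal (max 0 (- ln t))" unfolding Nn_def t_def using False by simp
    then have "ennreal r < ennreal (max 0 (- ln t))" using y r by simp
    then have rl: "r < - ln t" using r by (simp add: ennreal_less_iff)
    have "exp (2 * ln t) = exp (ln t + ln t)" by (simp only: mult_2)
    also have "\<dots> = exp (ln t) * exp (ln t)" by (rule exp_add)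
    also have "\<dots> = t\<^sup>2" using t0 by (simp add: power2_eq_square)
    finally have et: "exp (2 * ln t) = t\<^sup>2" .
    have "exp (2 * ln t) < exp (- 2 * r)" using rl by simp
    then have gpos: "0 < exp (- 2 * r) - t\<^sup>2" using et by simp
    obtain m where m: "eps m < exp (- 2 * r) - t\<^sup>2"
      using eps_small[OF gpos, of 0] by auto
    have pos: "0 < t\<^sup>2 + eps m" using t0 eps_pos[of m] by (intro add_nonneg_pos) simp_all
    have "t\<^sup>2 + eps m < exp (- 2 * r)" using m by simp
    then have "ln (t\<^sup>2 + eps m) < ln (exp (- 2 * r))" using pos by (subst ln_less_cancel_iff) auto
    then have "r < - (ln (t\<^sup>2 + eps m) / 2)" by simp
    then have "r < max 0 (- Lm m x)" unfolding Lm_def hr_def t_def by simp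
    then show ?thesis by blast
  qed
  then obtain m where "r < max 0 (- Lm m x)" by blast
  then have "y < Nm m x" unfolding Nm_def using r by (simp add: ennreal_less_iff)
  then have "y < (SUP m. Nm m x)" using less_SUP_iff by blast
  then show "y \<le> (SUP m. Nm m x)" by simp
qed


lemma Pp_finite: "(\<integral>\<^sup>+x. Pp x \<partial>M) < \<infinity>"
proof -
  interpret prob_space M by (rule probM)
  define A where "A = (\<Sum>ch\<in>S. real_of_int \<bar>c ch\<bar>)"
  have "(\<integral>\<^sup>+x. Pp x \<partial>M) \<le> (\<integral>\<^sup>+x. ennreal A \<partial>M)"
  proof (rule nn_integral_mono)
    fix x
    have "max 0 (ln (cmod (fF x))) \<le> cmod (fF x)"
    proof (cases "fF x = 0")
      case True then show ?thesis by simp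
    next
      case False
      then have "ln (cmod (fF x)) \<le> cmod (fF x) - 1" by (intro ln_le_minus_one) simp
      then show ?thesis by simp
    qed
    also have "\<dots> \<le> A" unfolding A_def by (rule fF_bound)
    finally show "Pp x \<le> ennreal A" unfolding Pp_def by (rule ennreal_leI)
  qed
  also have "\<dots> = ennreal A" using emeasure_space_1 by simp
  also have "\<dots> < \<infinity>" by simp
  finally show ?thesis .
qed

lemma NnPp:
  assumes H: "\<And>\<epsilon>. 0 < \<epsilon> \<Longrightarrow> \<epsilon> < 1 \<Longrightarrow> 0 \<le> (\<integral>x. ln (hr x + \<epsilon>) \<partial>M)"
  shows "(\<integral>\<^sup>+x. Nn x \<partial>M) \<le> (\<integral>\<^sup>+x. Pp x \<partial>M)"
proof -
  have "(\<integral>\<^sup>+x. Nn x \<partial>M) \<le> (\<integral>\<^sup>+x. (SUP m. Nm m x) \<partial>M)"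
    by (rule nn_integral_mono) (rule Nn_le_SUP)
  also have "\<dots> = (SUP m. (\<integral>\<^sup>+x. Nm m x \<partial>M))"
    by (rule nn_integral_monotone_convergence_SUP[OF Nm_inc Nm_meas])
  also have "\<dots> \<le> (\<integral>\<^sup>+x. Pp x \<partial>M)"
  proof (rule SUP_least)
    fix m
    show "(\<integral>\<^sup>+x. Nm m x \<partial>M) \<le> (\<integral>\<^sup>+x. Pp x \<partial>M)"
    proof (rule ennreal_le_epsilon)
      fix e :: real assume e: "0 < e"
      obtain m' where m': "m \<le> m'" "eps m' < e" using eps_small[OF e] by blast
      have "(\<integral>\<^sup>+x. Nm m x \<partial>M) \<le> (\<integral>\<^sup>+x. Nm m' x \<partial>M)"
        using Nm_inc m'(1) by (intro nn_integral_mono) (auto simp: incseq_def le_fun_def)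
      also have "\<dots> \<le> (\<integral>\<^sup>+x. Pm m' x \<partial>M)" by (rule NP[OF H])
      also have "\<dots> \<le> (\<integral>\<^sup>+x. Pp x \<partial>M) + ennreal (eps m' / 2)" by (rule Pm_Pp)
      also have "\<dots> \<le> (\<integral>\<^sup>+x. Pp x \<partial>M) + ennreal e"
        using m' eps_pos[of m'] by (intro add_left_mono ennreal_leI) simp
      finally show "(\<integral>\<^sup>+x. Nm m x \<partial>M) \<le> (\<integral>\<^sup>+x. Pp x \<partial>M) + ennreal e" .
    qed
  qed
  finally show ?thesis .
qed

lemma mahler_fF:
  assumes H: "\<And>\<epsilon>. 0 < \<epsilon> \<Longrightarrow> \<epsilon> < 1 \<Longrightarrow> 0 \<le> (\<integral>x. ln (hr x + \<epsilon>) \<partial>M)"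
  shows "0 \<le> mahler_m M fF"
proof -
  have e1: "(\<lambda>x. if fF x = 0 then 0 else ennreal (max 0 (ln (cmod (fF x))))) = Pp"
    unfolding Pp_def by auto
  have e2: "(\<lambda>x. if fF x = 0 then \<infinity> else ennreal (max 0 (- ln (cmod (fF x))))) = Nn"
    unfolding Nn_def by auto
  have m: "mahler_m M fF = enn2ereal (\<integral>\<^sup>+x. Pp x \<partial>M) - enn2ereal (\<integral>\<^sup>+x. Nn x \<partial>M)"
    unfolding mahler_m_def e1 e2 ..
  obtain ra where ra: "0 \<le> ra" "(\<integral>\<^sup>+x. Pp x \<partial>M) = ennreal ra"
    using Pp_finite by (cases "(\<integral>\<^sup>+x. Pp x \<partial>M)" rule: ennreal_cases) auto
  have le: "(\<integral>\<^sup>+x. Nn x \<partial>M) \<le> ennreal ra" using NnPp[OF H] ra by simp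
  then obtain rb where rb: "0 \<le> rb" "(\<integral>\<^sup>+x. Nn x \<partial>M) = ennreal rb"
    by (cases "(\<integral>\<^sup>+x. Nn x \<partial>M)" rule: ennreal_cases) (auto simp: top_unique)
  have "rb \<le> ra" using le rb ra by (simp add: ennreal_le_iff)
  then show ?thesis unfolding m using ra rb by simp
qed
end

theorem lemma2p1:
  fixes M :: "'a::{topological_ab_group_add, t2_space} measure"
    and f :: "'a \<Rightarrow> complex"
  assumes "compact (UNIV :: 'a set)"
    and "normalized_haar M"
    and "int_char_poly f"
    and "emeasure M {x. f x = 0} = 0"
  shows "mahler_m M f \<ge> 0"
proof -
  from assms(3) obtain S c where S: "finite S" "\<forall>ch\<in>S. character ch"
    and f: "f = (\<lambda>x. \<Sum>ch\<in>S. of_int (c ch) * ch x)"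
    unfolding int_char_poly_def by blast
  interpret fsetup M S c
  proof unfold_locales
    show "normalized_haar M" by (rule assms(2))
    show "finite S" by (rule S(1))
    show "\<And>ch. ch \<in> S \<Longrightarrow> character ch" using S(2) by blast
  qed
  have fF: "fF = f" unfolding fF_def f ..
  have z: "emeasure M {x. fF x = 0} = 0" using assms(4) fF by simp
  have H: "\<And>\<epsilon>. 0 < \<epsilon> \<Longrightarrow> \<epsilon> < 1 \<Longrightarrow> 0 \<le> (\<integral>x. ln (hr x + \<epsilon>) \<partial>M)"
    using key0[OF z] by blast
  show ?thesis using mahler_fF[OF H] fF by simp
qed


end
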